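(* Let $\mathcal{P}$ be a partition of $\{1,\dots,n\}$ and $\mathcal{U}$ a subspace of $\mathbb{R}^n$. The following are equivalent: (1) $\mathcal{U}$ is recoverable by BMTFA; (2) $\mathcal{U}$ is $\mathcal{P}$-realizable; (3) $\mathcal{U}^\perp$ has the $\mathcal{P}$-ellipsoid fitting property.
   Context: A matrix is $\mathcal{P}$-block-diagonal if it is zero outside the principal submatrices indexed by the blocks $\mathcal{I}\in\mathcal{P}$. Block minimum trace factor analysis (BMTFA) with input symmetric $X$: minimize $\operatorname{tr}(L)$ subject to $X=B+L$, $L$ positive semidefinite, $B$ $\mathcal{P}$-block-diagonal. $\mathcal{U}$ is recoverable by BMTFA if for every $\mathcal{P}$-block-diagonal $B^\star$ and every positive semidefinite $L^\star$ with column space $\mathcal{U}$, $(B^\star,L^\star)$ is the unique optimum of BMTFA with input $B^\star+L^\star$. The $\mathcal{P}$-elliptope is $\mathcal{E}_{\mathcal{P}}=\{Y\succeq 0: Y_{\mathcal{I}}=I \text{ for all }\mathcal{I}\in\mathcal{P}\}$, where $Y_{\mathcal{I}}$ is the principal submatrix indexed by $\mathcal{I}$. $\mathcal{U}$ is $\mathcal{P}$-realizable if some $Y\in\mathcal{E}_{\mathcal{P}}$ has nullspace containing $\mathcal{U}$. For $\mathcal{I}\subseteq\{1,\dots,n\}$, $S^{\mathcal{I}}=\{x\in\mathbb{R}^n:\|x\|_2=1,\ x_j=0\text{ for }j\notin\mathcal{I}\}$. A centered ellipsoid in $\mathbb{R}^k$ is given by a positive semidefinite $M$, with boundary $\{y: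 y^TMy=1\}$. A subspace $\mathcal{V}$ has the $\mathcal{P}$-ellipsoid fitting property if there is a $k\times n$ matrix $V$ with row space $\mathcal{V}$ and a centered ellipsoid in $\mathbb{R}^k$ whose boundary contains $\bigcup_{\mathcal{I}\in\mathcal{P}}V(S^{\mathcal{I}})$. *)

theory Defs
  imports "Jordan_Normal_Form.Matrix_Kernel" "HOL-Library.Disjoint_Sets"
begin

text \<open>Conventions: R^n is realised as JNF vectors of dimension n, coordinates
indexed by 0..<n (instead of 1..n); matrices are JNF matrices with explicit
dimensions.\<close>

definition mtrace :: "real mat \<Rightarrow> real" where
  "mtrace A = (\<Sum>i\<in>{0..<dim_row A}. A $$ (i, i))"

definition psd :: "nat \<Rightarrow> real mat \<Rightarrow> bool" where
  "psd n A \<longleftrightarrow> A \<in> carrier_mat n n \<and> transpose_mat A = A \<and>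
     (\<forall>x \<in> carrier_vec n. x \<bullet> (A *\<^sub>v x) \<ge> 0)"

definition block_diag :: "nat \<Rightarrow> nat set set \<Rightarrow> real mat \<Rightarrow> bool" where
  "block_diag n P B \<longleftrightarrow> B \<in> carrier_mat n n \<and>
     (\<forall>i<n. \<forall>j<n. (\<not> (\<exists>I\<in>P. i \<in> I \<and> j \<in> I)) \<longrightarrow> B $$ (i, j) = 0)"

definition bmtfa_feasible :: "nat \<Rightarrow> nat set set \<Rightarrow> real mat \<Rightarrow> real mat \<Rightarrow> real mat \<Rightarrow> bool" where
  "bmtfa_feasible n P X B L \<longleftrightarrow> X = B + L \<and> psd n L \<and> block_diag n P B"

definition bmtfa_unique_opt :: "nat \<Rightarrow> nat set set \<Rightarrow> real mat \<Rightarrow> real mat \<Rightarrow> real mat \<Rightarrow> bool" where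
  "bmtfa_unique_opt n P X B L \<longleftrightarrow> bmtfa_feasible n P X B L \<and>
     (\<forall>B' L'. bmtfa_feasible n P X B' L' \<longrightarrow> (B', L') \<noteq> (B, L) \<longrightarrow> mtrace L < mtrace L')"

definition col_space :: "nat \<Rightarrow> real mat \<Rightarrow> real vec set" where
  "col_space n L = {L *\<^sub>v x | x. x \<in> carrier_vec n}"

definition row_space :: "nat \<Rightarrow> real mat \<Rightarrow> real vec set" where
  "row_space k V = {transpose_mat V *\<^sub>v y | y. y \<in> carrier_vec k}"

definition is_subspace :: "nat \<Rightarrow> real vec set \<Rightarrow> bool" where
  "is_subspace n U \<longleftrightarrow> U \<subseteq> carrier_vec n \<and> 0\<^sub>v n \<in> U \<and>
     (\<forall>u\<in>U. \<forall>v\<in>U. u + v \<in> U) \<and> (\<forall>c. \<forall>u\<in>U. c \<cdot>\<^sub>v u \<in> U)"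

definition orth_compl :: "nat \<Rightarrow> real vec set \<Rightarrow> real vec set" where
  "orth_compl n U = {x \<in> carrier_vec n. \<forall>u\<in>U. x \<bullet> u = 0}"

definition recoverable :: "nat \<Rightarrow> nat set set \<Rightarrow> real vec set \<Rightarrow> bool" where
  "recoverable n P U \<longleftrightarrow>
     (\<forall>B L. block_diag n P B \<longrightarrow> transpose_mat B = B \<longrightarrow> psd n L \<longrightarrow> col_space n L = U \<longrightarrow>
        bmtfa_unique_opt n P (B + L) B L)"

definition elliptope :: "nat \<Rightarrow> nat set set \<Rightarrow> real mat set" where
  "elliptope n P = {Y. psd n Y \<and>
     (\<forall>I\<in>P. \<forall>i\<in>I. \<forall>j\<in>I. Y $$ (i, j) = (if i = j then 1 else 0))}"

definition realizable :: "nat \<Rightarrow> nat set set \<Rightarrow> real vec set \<Rightarrow> bool" where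
  "realizable n P U \<longleftrightarrow> (\<exists>Y \<in> elliptope n P. U \<subseteq> mat_kernel Y)"

definition sphere_on :: "nat \<Rightarrow> nat set \<Rightarrow> real vec set" where
  "sphere_on n I = {x \<in> carrier_vec n. x \<bullet> x = 1 \<and> (\<forall>j<n. j \<notin> I \<longrightarrow> x $ j = 0)}"

text \<open>V is k x n, its row space is W, and the centered ellipsoid y^T M y = 1
(M psd, k x k) contains V(S^I) for all blocks I.\<close>
definition ellipsoid_fitting :: "nat \<Rightarrow> nat set set \<Rightarrow> real vec set \<Rightarrow> bool" where
  "ellipsoid_fitting n P W \<longleftrightarrow>
     (\<exists>k V M. V \<in> carrier_mat k n \<and> row_space k V = W \<and> psd k M \<and>
        (\<forall>I\<in>P. \<forall>x\<in>sphere_on n I. (V *\<^sub>v x) \<bullet> (M *\<^sub>v (V *\<^sub>v x)) = 1))"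

end

theory Submission
  imports Defs "HOL-Analysis.Function_Topology"
begin


definition qf :: "nat \<Rightarrow> (nat \<Rightarrow> nat \<Rightarrow> real) \<Rightarrow> (nat \<Rightarrow> real) \<Rightarrow> real" where
  "qf m a x = (\<Sum>i<m. \<Sum>j<m. x i * a i j * x j)"

definition psdf :: "nat \<Rightarrow> (nat \<Rightarrow> nat \<Rightarrow> real) \<Rightarrow> bool" where
  "psdf m a \<longleftrightarrow> (\<forall>i<m. \<forall>j<m. a i j = a j i) \<and> (\<forall>x. 0 \<le> qf m a x)"

lemma qf_Suc: "qf (Suc m) a x = qf m a x + x m * (\<Sum>j<m. a m j * x j)
   + (\<Sum>i<m. x i * a i m) * x m + x m * a m m * x m"
  unfolding qf_def by (simp add: sum.distrib sum_distrib_left sum_distrib_right algebra_simps)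

lemma qf_cong: "(\<And>k. k < m \<Longrightarrow> x k = y k) \<Longrightarrow> qf m a x = qf m a y"
  unfolding qf_def by (intro sum.cong refl) auto

lemma sum_two:
  fixes f :: "nat \<Rightarrow> real" and \<alpha> \<beta> :: real
  assumes "i < m" "j < m" "i \<noteq> j"
  shows "(\<Sum>k<m. (if k = i then \<alpha> else if k = j then \<beta> else 0) * f k) = \<alpha> * f i + \<beta> * f j"
proof -
  have "(\<Sum>k<m. (if k = i then \<alpha> else if k = j then \<beta> else 0) * f k)
      = (\<Sum>k<m. (if k = i then \<alpha> * f i else 0) + (if k = j then \<beta> * f j else 0))"
    using assms by (intro sum.cong) auto
  also have "\<dots> = \<alpha> * f i + \<beta> * f j" using assms by (simp add: sum.distrib)
  finally show ?thesis .
qed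

lemma sum_one:
  fixes f :: "nat \<Rightarrow> real" and \<alpha> :: real
  assumes "i < m"
  shows "(\<Sum>k<m. (if k = i then \<alpha> else 0) * f k) = \<alpha> * f i"
proof -
  have "(\<Sum>k<m. (if k = i then \<alpha> else 0) * f k) = (\<Sum>k<m. (if k = i then \<alpha> * f i else 0))"
    by (intro sum.cong) auto
  then show ?thesis using assms by simp
qed

lemma qf_alt: "qf m a x = (\<Sum>i<m. x i * (\<Sum>j<m. x j * a i j))"
  unfolding qf_def by (simp add: sum_distrib_left algebra_simps)

lemma qf_two:
  assumes "i < m" "j < m" "i \<noteq> j"
  shows "qf m a (\<lambda>k. if k = i then \<alpha> else if k = j then \<beta> else 0)
     = \<alpha> * \<alpha> * a i i + \<alpha> * \<beta> * a i j + \<beta> * \<alpha> * a j i + \<beta> * \<beta> * a j j"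
proof -
  have "qf m a (\<lambda>k. if k = i then \<alpha> else if k = j then \<beta> else 0)
     = (\<Sum>k<m. (if k = i then \<alpha> else if k = j then \<beta> else 0) * (\<alpha> * a k i + \<beta> * a k j))"
    unfolding qf_alt by (intro sum.cong refl) (simp only: sum_two[OF assms])
  also have "\<dots> = \<alpha> * (\<alpha> * a i i + \<beta> * a i j) + \<beta> * (\<alpha> * a j i + \<beta> * a j j)"
    by (rule sum_two[OF assms])
  finally show ?thesis by (simp add: algebra_simps)
qed

lemma qf_one:
  assumes "i < m"
  shows "qf m a (\<lambda>k. if k = i then \<alpha> else 0) = \<alpha> * \<alpha> * a i i"
proof -
  have "qf m a (\<lambda>k. if k = i then \<alpha> else 0)
     = (\<Sum>k<m. (if k = i then \<alpha> else 0) * (\<alpha> * a k i))"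
    unfolding qf_alt by (intro sum.cong refl) (simp only: sum_one[OF assms])
  also have "\<dots> = \<alpha> * (\<alpha> * a i i)" by (rule sum_one[OF assms])
  finally show ?thesis by simp
qed

lemma psdf_diag: "psdf m a \<Longrightarrow> i < m \<Longrightarrow> 0 \<le> a i i"
  using qf_one[of i m a 1] unfolding psdf_def by (metis mult_1)

lemma psdf_offdiag:
  assumes "psdf m a" "i < m" "j < m"
  shows "2 * \<bar>a i j\<bar> \<le> a i i + a j j"
proof (cases "i = j")
  case True thus ?thesis using psdf_diag[OF assms(1,2)] by simp
next
  case False
  have s: "a j i = a i j" using assms unfolding psdf_def by auto
  have "0 \<le> qf m a (\<lambda>k. if k = i then 1 else if k = j then 1 else 0)"
       "0 \<le> qf m a (\<lambda>k. if k = i then 1 else if k = j then -1 else 0)"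
    using assms unfolding psdf_def by auto
  then show ?thesis unfolding qf_two[OF assms(2,3) False] s by auto
qed

lemma psdf_zero_col:
  assumes "psdf m a" "i < m" "j < m" "a j j = 0"
  shows "a i j = 0"
proof (cases "i = j")
  case True thus ?thesis using assms by simp
next
  case False
  have s: "a j i = a i j" using assms unfolding psdf_def by auto
  have d: "0 \<le> a i i" using psdf_diag assms by auto
  define t where "t = - a i j / (a i i + 1)"
  have "0 \<le> qf m a (\<lambda>k. if k = i then t else if k = j then 1 else 0)"
    using assms unfolding psdf_def by auto
  then have h: "0 \<le> t * t * a i i + 2 * t * a i j" unfolding qf_two[OF assms(2,3) False] s assms(4)
    by (simp add: algebra_simps)
  show ?thesis
  proof (rule ccontr)
    assume nz: "a i j \<noteq> 0"
    have c: "a i i + 1 \<noteq> 0" using d by simp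
    have "t * t * a i i + 2 * t * a i j = (a i j)^2 * (a i i - 2 * (a i i + 1)) / (a i i + 1)^2"
      unfolding t_def using c by (simp add: divide_simps power2_eq_square) (simp add: algebra_simps)
    also have "\<dots> < 0" using nz d by (intro divide_neg_pos mult_pos_neg) auto
    finally show False using h by simp
  qed
qed

lemma qf_add_scale:
  "qf m a (\<lambda>k. x k + t * y k) = qf m a x + t * (\<Sum>i<m. \<Sum>j<m. y i * a i j * x j)
     + t * (\<Sum>i<m. \<Sum>j<m. x i * a i j * y j) + t * t * qf m a y"
  unfolding qf_def by (simp add: algebra_simps sum.distrib sum_distrib_left)

lemma psdf_null:
  assumes "psdf m a" "qf m a x = 0" "i < m"
  shows "(\<Sum>j<m. a i j * x j) = 0"
proof -
  define v where "v k = (\<Sum>j<m. a k j * x j)" for k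
  define N where "N = (\<Sum>i<m. v i * v i)"
  define Q where "Q = qf m a v"
  have sym: "\<And>i j. i < m \<Longrightarrow> j < m \<Longrightarrow> a i j = a j i" using assms unfolding psdf_def by auto
  have Q0: "0 \<le> Q" using assms unfolding psdf_def Q_def by auto
  have e1: "(\<Sum>i<m. \<Sum>j<m. v i * a i j * x j) = N"
    unfolding N_def by (simp add: v_def sum_distrib_left algebra_simps)
  have "(\<Sum>i<m. \<Sum>j<m. x i * a i j * v j) = (\<Sum>j<m. \<Sum>i<m. x i * a i j * v j)"
    by (rule sum.swap)
  also have "\<dots> = (\<Sum>j<m. v j * (\<Sum>i<m. a j i * x i))"
    by (intro sum.cong refl) (auto simp: sum_distrib_left sym algebra_simps intro!: sum.cong)
  also have "\<dots> = N" unfolding N_def v_def by simp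
  finally have e2: "(\<Sum>i<m. \<Sum>j<m. x i * a i j * v j) = N" .
  define t where "t = - N / (Q + 1)"
  have "0 \<le> qf m a (\<lambda>k. x k + t * v k)" using assms unfolding psdf_def by auto
  then have h: "0 \<le> 2 * t * N + t * t * Q" unfolding qf_add_scale e1 e2 assms(2) Q_def[symmetric]
    by (simp add: algebra_simps)
  have N0: "0 \<le> N" unfolding N_def by (intro sum_nonneg) auto
  have "N = 0"
  proof (rule ccontr)
    assume "N \<noteq> 0"
    have c: "Q + 1 \<noteq> 0" using Q0 by simp
    have "2 * t * N + t * t * Q = N^2 * (Q - 2 * (Q + 1)) / (Q + 1)^2"
      unfolding t_def using c by (simp add: divide_simps power2_eq_square) (simp add: algebra_simps)
    also have "\<dots> < 0" using \<open>N \<noteq> 0\<close> Q0 by (intro divide_neg_pos mult_pos_neg) auto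
    finally show False using h by simp
  qed
  then have "\<forall>i\<in>{..<m}. v i * v i = 0" unfolding N_def
    by (subst sum_nonneg_eq_0_iff[symmetric]) auto
  then show ?thesis using assms(3) unfolding v_def by auto
qed


lemma psdf_gram:
  "psdf m a \<Longrightarrow> \<exists>y. \<forall>i<m. \<forall>j<m. a i j = (\<Sum>k<m. y k i * y k j)"
proof (induction m arbitrary: a)
  case 0 then show ?case by auto
next
  case (Suc m)
  have sym: "\<And>i j. i < Suc m \<Longrightarrow> j < Suc m \<Longrightarrow> a i j = a j i" using Suc.prems unfolding psdf_def by auto
  define p where "p = a m m"
  have p0: "0 \<le> p" unfolding p_def using psdf_diag[OF Suc.prems] by auto
  have col0: "p = 0 \<Longrightarrow> i < Suc m \<Longrightarrow> a i m = 0" for i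
    using psdf_zero_col[OF Suc.prems, of i m] unfolding p_def by auto
  define b where "b i j = a i j - a i m * a j m / p" for i j
  have "psdf m b"
    unfolding psdf_def
  proof (intro conjI allI impI)
    fix i j assume "i < m" "j < m" then show "b i j = b j i" unfolding b_def using sym by auto
  next
    fix x
    define s where "s = (\<Sum>i<m. x i * a i m)"
    define z where "z k = (if k = m then - s / p else x k)" for k
    have qz: "qf m a z = qf m a x" by (rule qf_cong) (auto simp: z_def)
    have s2: "(\<Sum>j<m. a m j * z j) = s" unfolding s_def z_def
      by (intro sum.cong refl) (auto simp: sym mult.commute)
    have s3: "(\<Sum>i<m. z i * a i m) = s" unfolding s_def z_def by (intro sum.cong refl) auto
    have "0 \<le> qf (Suc m) a z" using Suc.prems unfolding psdf_def by auto
    also have "qf (Suc m) a z = qf m a x - s * s / p"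
      unfolding qf_Suc qz s2 s3 using p0 by (cases "p = 0") (auto simp: z_def p_def[symmetric] field_simps)
    also have "s * s / p = (\<Sum>i<m. \<Sum>j<m. x i * (a i m * a j m / p) * x j)"
      unfolding s_def sum_product sum_divide_distrib by (intro sum.cong refl) (simp add: algebra_simps)
    finally show "0 \<le> qf m b x" unfolding qf_def b_def
      by (simp add: algebra_simps sum_subtractf)
  qed
  from Suc.IH[OF this] obtain y' where y': "\<And>i j. i < m \<Longrightarrow> j < m \<Longrightarrow> b i j = (\<Sum>k<m. y' k i * y' k j)"
    by blast
  define y where "y k i = (if k < m then (if i < m then y' k i else 0) else a i m / sqrt p)" for k i
  have sq: "sqrt p * sqrt p = p" using p0 by (simp add: real_sqrt_mult_self)
  show ?case
  proof (intro exI allI impI)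
    fix i j assume ij: "i < Suc m" "j < Suc m"
    have "(\<Sum>k<Suc m. y k i * y k j) = (\<Sum>k<m. y k i * y k j) + a i m * a j m / p"
      unfolding y_def using p0 by simp
    also have "\<dots> = a i j"
    proof (cases "i < m \<and> j < m")
      case True
      have "(\<Sum>k<m. y k i * y k j) = b i j" using True y' unfolding y_def by simp
      then show ?thesis unfolding b_def by simp
    next
      case False
      then have "(\<Sum>k<m. y k i * y k j) = 0" unfolding y_def by auto
      moreover have "a i m * a j m / p = a i j"
      proof (cases "p = 0")
        case True
        then show ?thesis using False ij col0[of i] col0[of j] sym[of i j] by (auto simp: less_Suc_eq)
      next
        case pnz: False
        from False ij have "i = m \<or> j = m" by auto
        then show ?thesis using pnz sym[of i m] sym[of m j] ij by (auto simp: p_def)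
      qed
      ultimately show ?thesis by simp
    qed
    finally show "a i j = (\<Sum>k<Suc m. y k i * y k j)" by simp
  qed
qed


lemma (in vec_space) orth_card_le:
  fixes q :: "nat \<Rightarrow> 'a vec"
  assumes C: "\<forall>k<m. q k \<in> carrier_vec n" and nz: "\<forall>k<m. q k \<bullet> q k \<noteq> 0"
    and orth: "\<forall>k<m. \<forall>l<m. k \<noteq> l \<longrightarrow> q k \<bullet> q l = 0"
  shows "m \<le> n"
proof -
  let ?S = "q ` {..<m}"
  have inj: "inj_on q {..<m}"
  proof (rule inj_onI)
    fix k l assume kl: "k \<in> {..<m}" "l \<in> {..<m}" "q k = q l"
    show "k = l"
    proof (rule ccontr)
      assume "k \<noteq> l"
      then have "q k \<bullet> q l = 0" using orth kl by auto
      then show False using nz kl by auto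
    qed
  qed
  have S: "?S \<subseteq> carrier_vec n" using C by auto
  have li: "\<not> lin_dep ?S"
  proof
    assume "lin_dep ?S"
    from this[unfolded lin_dep_def] obtain A a v where
      fin: "finite A" and A: "A \<subseteq> ?S"
      and lc: "lincomb a A = 0\<^sub>v n" and v: "v \<in> A" and av: "a v \<noteq> 0"
      by auto
    have AC: "A \<subseteq> carrier_vec n" using A S by auto
    have vC: "v \<in> carrier_vec n" using v AC by auto
    have "lincomb a A \<bullet> v = (\<Sum>w\<in>A. (a w \<cdot>\<^sub>v w) \<bullet> v)"
      unfolding lincomb_def by (rule finsum_scalar_prod_sum) (use AC vC in auto)
    also have "\<dots> = (\<Sum>w\<in>A. a w * (w \<bullet> v))"
      by (intro sum.cong refl) (use AC vC in auto)
    also have "\<dots> = a v * (v \<bullet> v) + (\<Sum>w\<in>A - {v}. a w * (w \<bullet> v))"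
      using fin v by (simp add: sum.remove)
    also have "(\<Sum>w\<in>A - {v}. a w * (w \<bullet> v)) = 0"
    proof (intro sum.neutral ballI)
      fix w assume w: "w \<in> A - {v}"
      have "w \<in> ?S" "v \<in> ?S" using w A v by auto
      then obtain k l where "k < m" "l < m" "w = q k" "v = q l" by auto
      with w have "w \<bullet> v = 0" using orth by auto
      then show "a w * (w \<bullet> v) = 0" by simp
    qed
    finally have "a v * (v \<bullet> v) = 0" using lc vC by simp
    moreover have "v \<bullet> v \<noteq> 0" using v A nz by auto
    ultimately show False using av by simp
  qed
  have "card ?S \<le> dim" by (rule li_le_dim(2)[OF fin_dim S li])
  then show ?thesis using card_image[OF inj] dim_is_n by simp
qed

lemma orth_card_le_real:
  assumes "\<forall>k<m. q k \<in> carrier_vec n" "\<forall>k<m. q k \<bullet> q k \<noteq> (0::real)"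
    "\<forall>k<m. \<forall>l<m. k \<noteq> l \<longrightarrow> q k \<bullet> q l = 0"
  shows "m \<le> n"
  using vec_space.orth_card_le[of m q n] assms by auto


lemma dot_eq: "w \<in> carrier_vec n \<Longrightarrow> (v::real vec) \<bullet> w = (\<Sum>i<n. v $ i * w $ i)"
  unfolding scalar_prod_def by (simp add: atLeast0LessThan)

lemma vec_self_zero:
  assumes "(x::real vec) \<in> carrier_vec n" "x \<bullet> x = 0"
  shows "x = 0\<^sub>v n"
proof -
  have "(\<Sum>i<n. x $ i * x $ i) = 0" using assms dot_eq by metis
  then have "\<forall>i\<in>{..<n}. x $ i * x $ i = 0" by (subst sum_nonneg_eq_0_iff[symmetric]) auto
  then show ?thesis using assms(1) by (intro eq_vecI) auto
qed

lemma mat_vec_idx: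
  "i < n \<Longrightarrow> (x::real vec) \<in> carrier_vec n \<Longrightarrow> (mat n n f *\<^sub>v x) $ i = (\<Sum>j<n. f (i, j) * x $ j)"
  by (simp add: dot_eq[of x n])

lemma mat_vec_idx': "(A::real mat) \<in> carrier_mat n n \<Longrightarrow> i < n \<Longrightarrow> x \<in> carrier_vec n \<Longrightarrow>
   (A *\<^sub>v x) $ i = (\<Sum>j<n. A $$ (i, j) * x $ j)"
  by (simp add: dot_eq[of x n] row_def)

lemma subspace_comb:
  fixes m :: nat
  assumes U: "is_subspace n U" and q: "\<forall>k<m. q k \<in> U"
  shows "vec n (\<lambda>i. \<Sum>k<m. d k * q k $ i) \<in> U"
  using q
proof (induction m)
  case 0
  have "vec n (\<lambda>i. \<Sum>k<0. d k * q k $ i) = 0\<^sub>v n" by (intro eq_vecI) auto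
  then show ?case using U unfolding is_subspace_def by simp
next
  case (Suc m)
  have qm: "q m \<in> carrier_vec n" using Suc.prems U unfolding is_subspace_def by auto
  have "vec n (\<lambda>i. \<Sum>k<Suc m. d k * q k $ i) = vec n (\<lambda>i. \<Sum>k<m. d k * q k $ i) + d m \<cdot>\<^sub>v q m"
    using qm by (intro eq_vecI) auto
  moreover have "vec n (\<lambda>i. \<Sum>k<m. d k * q k $ i) \<in> U" using Suc by auto
  moreover have "d m \<cdot>\<^sub>v q m \<in> U" using Suc.prems U unfolding is_subspace_def by auto
  moreover have "\<forall>u\<in>U. \<forall>v\<in>U. u + v \<in> U" using U unfolding is_subspace_def by blast
  ultimately show ?case by simp
qed

lemma subspace_diff:
  assumes U: "is_subspace n U" and "u \<in> U" "v \<in> U"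
  shows "u - v \<in> U"
proof -
  have c: "u \<in> carrier_vec n" "v \<in> carrier_vec n" using assms unfolding is_subspace_def by auto
  have "u - v = u + (-1) \<cdot>\<^sub>v v" using c by (intro eq_vecI) auto
  moreover have "(-1) \<cdot>\<^sub>v v \<in> U" using assms unfolding is_subspace_def by blast
  moreover have "\<forall>u\<in>U. \<forall>v\<in>U. u + v \<in> U" using U unfolding is_subspace_def by blast
  ultimately show ?thesis using assms(2) by simp
qed

lemma proj_exists:
  fixes U :: "real vec set"
  assumes U: "is_subspace n U"
  shows "\<exists>Pm \<in> carrier_mat n n. (\<forall>x\<in>carrier_vec n. Pm *\<^sub>v x \<in> U) \<and> (\<forall>u\<in>U. Pm *\<^sub>v u = u) \<and>
     (\<forall>x\<in>carrier_vec n. \<forall>u\<in>U. (x - Pm *\<^sub>v x) \<bullet> u = 0)"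
proof -
  have UC: "U \<subseteq> carrier_vec n" using U unfolding is_subspace_def by auto
  define good where "good (m::nat) q \<longleftrightarrow> (\<forall>k<m. q k \<in> U \<and> q k \<bullet> q k \<noteq> (0::real)) \<and>
      (\<forall>k<m. \<forall>l<m. k \<noteq> l \<longrightarrow> q k \<bullet> q l = 0)" for m q
  have bnd: "good m q \<Longrightarrow> m \<le> n" for m q
    using orth_card_le_real[of m q n] UC unfolding good_def by auto
  define G where "G = (GREATEST m. \<exists>q. good m q)"
  have g0: "\<exists>q. good 0 q" unfolding good_def by auto
  have "\<exists>q. good G q" unfolding G_def
    by (rule GreatestI_nat[of _ 0 n]) (use g0 bnd in auto)
  then obtain q where gq: "good G q" by blast
  have qU: "\<And>k. k < G \<Longrightarrow> q k \<in> U" and qC: "\<And>k. k < G \<Longrightarrow> q k \<in> carrier_vec n"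
    and qnz: "\<And>k. k < G \<Longrightarrow> q k \<bullet> q k \<noteq> 0"
    and qo: "\<And>k l. k < G \<Longrightarrow> l < G \<Longrightarrow> k \<noteq> l \<Longrightarrow> q k \<bullet> q l = 0"
    using gq UC unfolding good_def by auto
  have maxim: "u = 0\<^sub>v n" if u: "u \<in> U" "\<forall>k<G. q k \<bullet> u = 0" for u
  proof (rule ccontr)
    assume nz: "u \<noteq> 0\<^sub>v n"
    have uC: "u \<in> carrier_vec n" using u UC by auto
    have uu: "u \<bullet> u \<noteq> 0" using vec_self_zero[OF uC] nz by auto
    define q' where "q' = q(G := u)"
    have "good (Suc G) q'" unfolding good_def q'_def
    proof (intro conjI allI impI)
      fix k assume "k < Suc G"
      then show "(q(G := u)) k \<in> U"
        using qU u by (cases "k = G") auto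
    next
      fix k assume "k < Suc G"
      then show "(q(G := u)) k \<bullet> (q(G := u)) k \<noteq> 0"
        using qnz uu by (cases "k = G") auto
    next
      fix k l assume kl: "k < Suc G" "l < Suc G" "k \<noteq> l"
      show "(q(G := u)) k \<bullet> (q(G := u)) l = 0"
      proof (cases "k = G")
        case True
        then have "l < G" using kl by auto
        then show ?thesis using True kl u comm_scalar_prod[OF qC[of l] uC] by auto
      next
        case False
        then show ?thesis using kl qo u by (cases "l = G") auto
      qed
    qed
    then have "Suc G \<le> G" unfolding G_def
      by (intro Greatest_le_nat[of _ _ n]) (use bnd in auto)
    then show False by simp
  qed
  define c where "c k x = (q k \<bullet> x) / (q k \<bullet> q k)" for k x
  define Pm where "Pm = mat n n (\<lambda>(i, j). \<Sum>k<G. q k $ i * q k $ j / (q k \<bullet> q k))"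
  have PC: "Pm \<in> carrier_mat n n" unfolding Pm_def by simp
  have Px: "Pm *\<^sub>v x = vec n (\<lambda>i. \<Sum>k<G. c k x * q k $ i)" if x: "x \<in> carrier_vec n" for x
  proof (intro eq_vecI)
    fix i assume i: "i < dim_vec (vec n (\<lambda>i. \<Sum>k<G. c k x * q k $ i))"
    then have i': "i < n" by simp
    have "(Pm *\<^sub>v x) $ i = (\<Sum>j<n. (\<Sum>k<G. q k $ i * q k $ j / (q k \<bullet> q k)) * x $ j)"
      unfolding Pm_def by (subst mat_vec_idx[OF i' x]) simp
    also have "\<dots> = (\<Sum>k<G. \<Sum>j<n. q k $ i * q k $ j / (q k \<bullet> q k) * x $ j)"
      by (simp add: sum_distrib_right sum.swap[of _ "{..<n}"])
    also have "\<dots> = (\<Sum>k<G. c k x * q k $ i)"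
    proof (intro sum.cong refl)
      fix k assume "k \<in> {..<G}"
      then have "q k \<bullet> x = (\<Sum>j<n. q k $ j * x $ j)" using dot_eq x by blast
      then show "(\<Sum>j<n. q k $ i * q k $ j / (q k \<bullet> q k) * x $ j) = c k x * q k $ i"
        unfolding c_def by (simp add: sum_distrib_left sum_divide_distrib algebra_simps)
    qed
    finally show "(Pm *\<^sub>v x) $ i = vec n (\<lambda>i. \<Sum>k<G. c k x * q k $ i) $ i" using i' by simp
  qed (simp add: Pm_def)
  have PU: "Pm *\<^sub>v x \<in> U" if "x \<in> carrier_vec n" for x
    unfolding Px[OF that] by (rule subspace_comb[OF U]) (use qU in auto)
  have dotcomb: "w \<bullet> vec n (\<lambda>i. \<Sum>k<G. d k * q k $ i) = (\<Sum>k<G. d k * (w \<bullet> q k))"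
    if w: "w \<in> carrier_vec n" for w d
  proof -
    have "w \<bullet> vec n (\<lambda>i. \<Sum>k<G. d k * q k $ i) = (\<Sum>i<n. w $ i * (\<Sum>k<G. d k * q k $ i))"
      by (simp add: dot_eq)
    also have "\<dots> = (\<Sum>k<G. d k * (\<Sum>i<n. w $ i * q k $ i))"
      by (simp add: sum_distrib_left sum.swap[of _ "{..<n}"] algebra_simps)
    also have "\<dots> = (\<Sum>k<G. d k * (w \<bullet> q k))"
      by (intro sum.cong refl) (simp add: dot_eq[OF qC])
    finally show ?thesis .
  qed
  have orthq: "(x - Pm *\<^sub>v x) \<bullet> q l = 0" if x: "x \<in> carrier_vec n" and l: "l < G" for x l
  proof -
    have PxC: "Pm *\<^sub>v x \<in> carrier_vec n" using PC x by simp
    have "(x - Pm *\<^sub>v x) \<bullet> q l = x \<bullet> q l - (Pm *\<^sub>v x) \<bullet> q l"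
      using PxC x qC[OF l] by (simp add: minus_scalar_prod_distrib)
    also have "(Pm *\<^sub>v x) \<bullet> q l = q l \<bullet> (Pm *\<^sub>v x)" using PxC qC[OF l] by (simp add: comm_scalar_prod)
    also have "\<dots> = (\<Sum>k<G. c k x * (q l \<bullet> q k))" unfolding Px[OF x] by (rule dotcomb[OF qC[OF l]])
    also have "\<dots> = (\<Sum>k<G. if k = l then c l x * (q l \<bullet> q l) else 0)"
      by (intro sum.cong refl) (use qo l in auto)
    also have "\<dots> = c l x * (q l \<bullet> q l)" using l by simp
    also have "\<dots> = x \<bullet> q l" unfolding c_def using qnz[OF l] comm_scalar_prod[OF qC[OF l] x] by simp
    finally show ?thesis by simp
  qed
  have Pid: "Pm *\<^sub>v u = u" if u: "u \<in> U" for u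
  proof -
    have uC: "u \<in> carrier_vec n" using u UC by auto
    have d: "u - Pm *\<^sub>v u \<in> U" using subspace_diff[OF U u PU[OF uC]] .
    have "\<forall>k<G. q k \<bullet> (u - Pm *\<^sub>v u) = 0"
      using orthq[OF uC] comm_scalar_prod[OF qC] d UC by (metis subsetD)
    then have z: "u - Pm *\<^sub>v u = 0\<^sub>v n" using maxim[OF d] by auto
    have PuC: "Pm *\<^sub>v u \<in> carrier_vec n" using PC uC by simp
    show ?thesis
    proof (rule eq_vecI)
      fix i assume "i < dim_vec u"
      then have i: "i < n" using uC by simp
      have dd: "dim_vec (Pm *\<^sub>v u) = n" using PC by simp
      have "(u - Pm *\<^sub>v u) $ i = 0" using z i by simp
      moreover have "(u - Pm *\<^sub>v u) $ i = u $ i - (Pm *\<^sub>v u) $ i" using i dd by simp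
      ultimately show "(Pm *\<^sub>v u) $ i = u $ i" by simp
    qed (use PuC uC PC in simp)
  qed
  have orthU: "(x - Pm *\<^sub>v x) \<bullet> u = 0" if x: "x \<in> carrier_vec n" and u: "u \<in> U" for x u
  proof -
    have uC: "u \<in> carrier_vec n" using u UC by auto
    have xpC: "x - Pm *\<^sub>v x \<in> carrier_vec n" using x PC by simp
    have "(x - Pm *\<^sub>v x) \<bullet> u = (x - Pm *\<^sub>v x) \<bullet> (Pm *\<^sub>v u)" using Pid[OF u] by (rule arg_cong[symmetric])
    also have "\<dots> = (\<Sum>k<G. c k u * ((x - Pm *\<^sub>v x) \<bullet> q k))" unfolding Px[OF uC] by (rule dotcomb[OF xpC])
    also have "\<dots> = 0" using orthq[OF x] by simp
    finally show ?thesis .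
  qed
  show ?thesis
    by (rule bexI[OF _ PC], intro conjI ballI) (simp_all add: PU Pid orthU)
qed


definition blk :: "nat set set \<Rightarrow> nat \<Rightarrow> nat \<Rightarrow> bool" where
  "blk P i j \<longleftrightarrow> (\<exists>I\<in>P. i \<in> I \<and> j \<in> I)"

lemma blk_refl: assumes "partition_on {0..<n} P" "i < n" shows "blk P i i"
proof -
  have "i \<in> \<Union>P" using partition_onD1[OF assms(1)] assms(2) by auto
  then show ?thesis unfolding blk_def by auto
qed

lemma block_sub: assumes "partition_on {0..<n} P" "I \<in> P" shows "I \<subseteq> {0..<n}"
proof -
  have "I \<subseteq> \<Union>P" using assms(2) by auto
  then show ?thesis using partition_onD1[OF assms(1)] by simp
qed

lemma blk_lt: assumes "partition_on {0..<n} P" "blk P i j" shows "i < n \<and> j < n"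
proof -
  obtain I where "I \<in> P" "i \<in> I" "j \<in> I" using assms(2) unfolding blk_def by auto
  then have "i \<in> {0..<n}" "j \<in> {0..<n}" using block_sub[OF assms(1)] by blast+
  then show ?thesis by simp
qed

lemma blk_sym: "blk P i j \<Longrightarrow> blk P j i"
  unfolding blk_def by auto

lemma blk_trans: assumes "partition_on {0..<n} P" "blk P i l" "blk P i j" shows "blk P l j"
proof -
  obtain I where I: "I \<in> P" "i \<in> I" "l \<in> I" using assms(2) unfolding blk_def by auto
  obtain J where J: "J \<in> P" "i \<in> J" "j \<in> J" using assms(3) unfolding blk_def by auto
  have "I = J"
  proof (rule ccontr)
    assume "I \<noteq> J"
    then have "I \<inter> J = {}" using disjointD[OF partition_onD2[OF assms(1)] I(1) J(1)] by auto
    then show False using I J by auto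
  qed
  then show ?thesis unfolding blk_def using I J by auto
qed

lemma mat_vec_gen: "(A::real mat) \<in> carrier_mat r c \<Longrightarrow> i < r \<Longrightarrow> x \<in> carrier_vec c \<Longrightarrow>
   (A *\<^sub>v x) $ i = (\<Sum>j<c. A $$ (i, j) * x $ j)"
  by (simp add: dot_eq[of x c] row_def)

lemma quad_eq:
  assumes "(A::real mat) \<in> carrier_mat n n" "x \<in> carrier_vec n"
  shows "x \<bullet> (A *\<^sub>v x) = qf n (\<lambda>i j. A $$ (i, j)) (\<lambda>i. x $ i)"
proof -
  have "x \<bullet> (A *\<^sub>v x) = (\<Sum>i<n. x $ i * (A *\<^sub>v x) $ i)" using assms by (simp add: dot_eq[of _ n])
  also have "\<dots> = (\<Sum>i<n. x $ i * (\<Sum>j<n. A $$ (i, j) * x $ j))"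
    by (intro sum.cong refl) (simp add: mat_vec_gen[OF assms(1) _ assms(2)])
  finally show ?thesis unfolding qf_def by (simp add: sum_distrib_left algebra_simps)
qed

lemma psd_sym: "psd n A \<Longrightarrow> i < n \<Longrightarrow> j < n \<Longrightarrow> A $$ (i, j) = A $$ (j, i)"
  unfolding psd_def by (metis index_transpose_mat(1) carrier_matD)

lemma psd_psdf: assumes "psd n A" shows "psdf n (\<lambda>i j. A $$ (i, j))"
  unfolding psdf_def
proof (intro conjI allI impI)
  fix i j assume "i < n" "j < n" then show "A $$ (i, j) = A $$ (j, i)" using psd_sym assms by auto
next
  fix f :: "nat \<Rightarrow> real"
  have AC: "A \<in> carrier_mat n n" using assms unfolding psd_def by auto
  have "0 \<le> vec n f \<bullet> (A *\<^sub>v vec n f)" using assms unfolding psd_def by auto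
  also have "\<dots> = qf n (\<lambda>i j. A $$ (i, j)) (\<lambda>i. vec n f $ i)" by (rule quad_eq[OF AC]) simp
  also have "\<dots> = qf n (\<lambda>i j. A $$ (i, j)) f" by (rule qf_cong) simp
  finally show "0 \<le> qf n (\<lambda>i j. A $$ (i, j)) f" .
qed

lemma psdf_psd:
  assumes "A \<in> carrier_mat n n" "\<And>i j. i < n \<Longrightarrow> j < n \<Longrightarrow> A $$ (i, j) = A $$ (j, i)"
    "psdf n (\<lambda>i j. A $$ (i, j))"
  shows "psd n A"
  unfolding psd_def
proof (intro conjI ballI)
  show "A \<in> carrier_mat n n" by fact
  show "transpose_mat A = A" using assms(1,2) by (intro eq_matI) auto
  fix x :: "real vec" assume x: "x \<in> carrier_vec n"
  show "0 \<le> x \<bullet> (A *\<^sub>v x)" unfolding quad_eq[OF assms(1) x] using assms(3) unfolding psdf_def by auto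
qed

lemma sym_bil:
  assumes A: "(A::real mat) \<in> carrier_mat n n" and s: "\<And>i j. i < n \<Longrightarrow> j < n \<Longrightarrow> A $$ (i, j) = A $$ (j, i)"
    and u: "u \<in> carrier_vec n" and v: "v \<in> carrier_vec n"
  shows "u \<bullet> (A *\<^sub>v v) = v \<bullet> (A *\<^sub>v u)"
proof -
  have "u \<bullet> (A *\<^sub>v v) = (\<Sum>i<n. u $ i * (\<Sum>j<n. A $$ (i, j) * v $ j))"
    using A v by (simp add: dot_eq[of _ n] mat_vec_gen[OF A _ v])
  also have "\<dots> = (\<Sum>i<n. \<Sum>j<n. u $ i * A $$ (i, j) * v $ j)" by (simp add: sum_distrib_left algebra_simps)
  also have "\<dots> = (\<Sum>j<n. \<Sum>i<n. u $ i * A $$ (i, j) * v $ j)" by (rule sum.swap)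
  also have "\<dots> = (\<Sum>j<n. v $ j * (\<Sum>i<n. A $$ (j, i) * u $ i))"
    by (intro sum.cong refl) (auto simp: sum_distrib_left s algebra_simps intro!: sum.cong)
  also have "\<dots> = v \<bullet> (A *\<^sub>v u)"
    using A u by (simp add: dot_eq[of _ n] mat_vec_gen[OF A _ u])
  finally show ?thesis .
qed

definition projm :: "nat \<Rightarrow> real vec set \<Rightarrow> real mat \<Rightarrow> bool" where
  "projm n U Pm \<longleftrightarrow> Pm \<in> carrier_mat n n \<and> (\<forall>x\<in>carrier_vec n. Pm *\<^sub>v x \<in> U) \<and> (\<forall>u\<in>U. Pm *\<^sub>v u = u) \<and>
     (\<forall>x\<in>carrier_vec n. \<forall>u\<in>U. (x - Pm *\<^sub>v x) \<bullet> u = 0)"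

lemma proj_ex: "is_subspace n U \<Longrightarrow> \<exists>Pm. projm n U Pm"
  using proj_exists unfolding projm_def by blast

lemma proj_sym:
  assumes pr: "projm n U Pm" and U: "is_subspace n U" and ij: "i < n" "j < n"
  shows "Pm $$ (i, j) = Pm $$ (j, i)"
proof -
  have PC: "Pm \<in> carrier_mat n n" using pr unfolding projm_def by auto
  have key: "x \<bullet> (Pm *\<^sub>v y) = (Pm *\<^sub>v x) \<bullet> (Pm *\<^sub>v y)" if x: "x \<in> carrier_vec n" and y: "y \<in> carrier_vec n" for x y
  proof -
    have PyU: "Pm *\<^sub>v y \<in> U" using pr y unfolding projm_def by auto
    have "(x - Pm *\<^sub>v x) \<bullet> (Pm *\<^sub>v y) = 0" using pr x PyU unfolding projm_def by auto
    moreover have "(x - Pm *\<^sub>v x) \<bullet> (Pm *\<^sub>v y) = x \<bullet> (Pm *\<^sub>v y) - (Pm *\<^sub>v x) \<bullet> (Pm *\<^sub>v y)"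
      using PC x y by (simp add: minus_scalar_prod_distrib)
    ultimately show ?thesis by simp
  qed
  have e: "unit_vec n i \<bullet> (Pm *\<^sub>v unit_vec n j) = Pm $$ (i, j)" if "i < n" "j < n" for i j
  proof -
    have "unit_vec n i \<bullet> (Pm *\<^sub>v unit_vec n j) = (Pm *\<^sub>v unit_vec n j) $ i"
      using that PC by simp
    also have "\<dots> = (\<Sum>l<n. Pm $$ (i, l) * unit_vec n j $ l)" by (rule mat_vec_gen[OF PC that(1)]) simp
    also have "\<dots> = (\<Sum>l<n. if l = j then Pm $$ (i, j) else 0)" using that by (intro sum.cong refl) auto
    also have "\<dots> = Pm $$ (i, j)" using that by simp
    finally show ?thesis .
  qed
  have "Pm $$ (i, j) = (Pm *\<^sub>v unit_vec n i) \<bullet> (Pm *\<^sub>v unit_vec n j)" using key[of "unit_vec n i" "unit_vec n j"] e ij by simp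
  also have "\<dots> = (Pm *\<^sub>v unit_vec n j) \<bullet> (Pm *\<^sub>v unit_vec n i)" using PC by (simp add: comm_scalar_prod[of _ n])
  also have "\<dots> = Pm $$ (j, i)" using key[of "unit_vec n j" "unit_vec n i"] e ij by simp
  finally show ?thesis .
qed

lemma proj_perp_zero:
  assumes pr: "projm n U Pm" and z: "z \<in> orth_compl n U"
  shows "Pm *\<^sub>v z = 0\<^sub>v n"
proof -
  have PC: "Pm \<in> carrier_mat n n" using pr unfolding projm_def by auto
  have zC: "z \<in> carrier_vec n" using z unfolding orth_compl_def by auto
  have PzU: "Pm *\<^sub>v z \<in> U" using pr zC unfolding projm_def by auto
  have "(z - Pm *\<^sub>v z) \<bullet> (Pm *\<^sub>v z) = 0" using pr zC PzU unfolding projm_def by auto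
  moreover have "(z - Pm *\<^sub>v z) \<bullet> (Pm *\<^sub>v z) = z \<bullet> (Pm *\<^sub>v z) - (Pm *\<^sub>v z) \<bullet> (Pm *\<^sub>v z)"
    using PC zC by (simp add: minus_scalar_prod_distrib)
  moreover have "z \<bullet> (Pm *\<^sub>v z) = 0" using z PzU unfolding orth_compl_def by auto
  ultimately have "(Pm *\<^sub>v z) \<bullet> (Pm *\<^sub>v z) = 0" by simp
  moreover have "Pm *\<^sub>v z \<in> carrier_vec n" using PC zC by simp
  ultimately show ?thesis using vec_self_zero[of "Pm *\<^sub>v z" n] by blast
qed

lemma proj_minus_perp:
  assumes pr: "projm n U Pm" and x: "x \<in> carrier_vec n"
  shows "x - Pm *\<^sub>v x \<in> orth_compl n U"
  using assms unfolding projm_def orth_compl_def by auto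


lemma mv_zero: "(A::real mat) \<in> carrier_mat r c \<Longrightarrow> A *\<^sub>v 0\<^sub>v c = 0\<^sub>v r"
  by (intro eq_vecI) (auto simp: dot_eq[of _ c])

lemma sphere_qf:
  assumes part: "partition_on {0..<n} P" and I: "I \<in> P" and Y: "Y \<in> elliptope n P"
    and x: "x \<in> sphere_on n I"
  shows "x \<bullet> (Y *\<^sub>v x) = 1"
proof -
  have YC: "Y \<in> carrier_mat n n" using Y unfolding elliptope_def psd_def by auto
  have xC: "x \<in> carrier_vec n" and xx: "x \<bullet> x = 1" and sup: "\<And>j. j < n \<Longrightarrow> j \<notin> I \<Longrightarrow> x $ j = 0"
    using x unfolding sphere_on_def by auto
  have blk: "\<And>i j. i \<in> I \<Longrightarrow> j \<in> I \<Longrightarrow> Y $$ (i, j) = (if i = j then 1 else 0)"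
    using Y I unfolding elliptope_def by auto
  have "x \<bullet> (Y *\<^sub>v x) = (\<Sum>i<n. \<Sum>j<n. x $ i * Y $$ (i, j) * x $ j)"
    unfolding quad_eq[OF YC xC] qf_def ..
  also have "\<dots> = (\<Sum>i<n. \<Sum>j<n. x $ i * (if i = j then 1 else 0) * x $ j)"
  proof (intro sum.cong refl)
    fix i j assume "i \<in> {..<n}" "j \<in> {..<n}"
    then show "x $ i * Y $$ (i, j) * x $ j = x $ i * (if i = j then 1 else 0) * x $ j"
      using blk[of i j] sup[of i] sup[of j] by (cases "i \<in> I \<and> j \<in> I") auto
  qed
  also have "\<dots> = (\<Sum>i<n. \<Sum>j<n. if j = i then x $ i * x $ i else 0)"
    by (intro sum.cong refl) auto
  also have "\<dots> = (\<Sum>i<n. x $ i * x $ i)" by simp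
  also have "\<dots> = x \<bullet> x" using xC by (simp add: dot_eq[of _ n])
  finally show ?thesis using xx by simp
qed

lemma real_EF:
  assumes part: "partition_on {0..<n} P" and U: "is_subspace n U" and R: "realizable n P U"
  shows "ellipsoid_fitting n P (orth_compl n U)"
proof -
  obtain Y where Y: "Y \<in> elliptope n P" and ker: "U \<subseteq> mat_kernel Y" using R unfolding realizable_def by auto
  have psdY: "psd n Y" using Y unfolding elliptope_def by auto
  have YC: "Y \<in> carrier_mat n n" using psdY unfolding psd_def by auto
  obtain Pm where pr: "projm n U Pm" using proj_ex[OF U] by auto
  have PC: "Pm \<in> carrier_mat n n" using pr unfolding projm_def by auto
  define V where "V = 1\<^sub>m n - Pm"
  have VC: "V \<in> carrier_mat n n" unfolding V_def using PC by (rule minus_carrier_mat)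
  have Vx: "V *\<^sub>v x = x - Pm *\<^sub>v x" if "x \<in> carrier_vec n" for x
    unfolding V_def using minus_mult_distrib_mat_vec[OF one_carrier_mat PC that] that by simp
  have VT: "transpose_mat V = V"
    unfolding V_def using PC proj_sym[OF pr U] by (intro eq_matI) auto
  have rs: "row_space n V = orth_compl n U"
  proof
    show "row_space n V \<subseteq> orth_compl n U"
      unfolding row_space_def VT using Vx proj_minus_perp[OF pr] by auto
  next
    show "orth_compl n U \<subseteq> row_space n V"
    proof
      fix z assume z: "z \<in> orth_compl n U"
      have zC: "z \<in> carrier_vec n" using z unfolding orth_compl_def by auto
      have "V *\<^sub>v z = z" using Vx[OF zC] proj_perp_zero[OF pr z] zC by simp
      then have "\<exists>y. z = V *\<^sub>v y \<and> y \<in> carrier_vec n" using zC by metis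
      then show "z \<in> row_space n V" unfolding row_space_def VT by blast
    qed
  qed
  have sph: "(V *\<^sub>v x) \<bullet> (Y *\<^sub>v (V *\<^sub>v x)) = 1" if I: "I \<in> P" and x: "x \<in> sphere_on n I" for I x
  proof -
    have xC: "x \<in> carrier_vec n" using x unfolding sphere_on_def by auto
    have PxC: "Pm *\<^sub>v x \<in> carrier_vec n" using PC xC by simp
    have PxU: "Pm *\<^sub>v x \<in> U" using pr xC unfolding projm_def by auto
    have YPx: "Y *\<^sub>v (Pm *\<^sub>v x) = 0\<^sub>v n" using ker PxU YC unfolding mat_kernel_def by auto
    have "Y *\<^sub>v (V *\<^sub>v x) = Y *\<^sub>v x - Y *\<^sub>v (Pm *\<^sub>v x)"
      unfolding Vx[OF xC] using YC xC PxC by (simp add: mult_minus_distrib_mat_vec)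
    also have "\<dots> = Y *\<^sub>v x" unfolding YPx using YC xC by simp
    finally have e1: "Y *\<^sub>v (V *\<^sub>v x) = Y *\<^sub>v x" .
    have YxC: "Y *\<^sub>v x \<in> carrier_vec n" using YC xC by simp
    have "(V *\<^sub>v x) \<bullet> (Y *\<^sub>v x) = x \<bullet> (Y *\<^sub>v x) - (Pm *\<^sub>v x) \<bullet> (Y *\<^sub>v x)"
      unfolding Vx[OF xC] using xC PxC YxC by (simp add: minus_scalar_prod_distrib)
    also have "(Pm *\<^sub>v x) \<bullet> (Y *\<^sub>v x) = x \<bullet> (Y *\<^sub>v (Pm *\<^sub>v x))"
      by (rule sym_bil[OF YC _ PxC xC]) (use psd_sym[OF psdY] in auto)
    also have "\<dots> = 0" unfolding YPx using xC by simp
    finally show ?thesis unfolding e1 using sphere_qf[OF part I Y x] by simp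
  qed
  show ?thesis unfolding ellipsoid_fitting_def
    by (rule exI[of _ n], rule exI[of _ V], rule exI[of _ Y]) (use VC rs psdY sph in auto)
qed

lemma EF_real:
  assumes part: "partition_on {0..<n} P" and U: "is_subspace n U"
    and E: "ellipsoid_fitting n P (orth_compl n U)"
  shows "realizable n P U"
proof -
  obtain k V M where VC: "V \<in> carrier_mat k n" and rs: "row_space k V = orth_compl n U"
    and psdM: "psd k M" and sph: "\<And>I x. I \<in> P \<Longrightarrow> x \<in> sphere_on n I \<Longrightarrow> (V *\<^sub>v x) \<bullet> (M *\<^sub>v (V *\<^sub>v x)) = 1"
    using E unfolding ellipsoid_fitting_def by blast
  have MC: "M \<in> carrier_mat k k" and MT: "transpose_mat M = M" using psdM unfolding psd_def by auto
  have VTC: "transpose_mat V \<in> carrier_mat n k" using VC by simp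
  define Y where "Y = transpose_mat V * M * V"
  have YC: "Y \<in> carrier_mat n n" unfolding Y_def using VC MC by simp
  have Yx: "Y *\<^sub>v x = transpose_mat V *\<^sub>v (M *\<^sub>v (V *\<^sub>v x))" if x: "x \<in> carrier_vec n" for x
  proof -
    have "(transpose_mat V * M) * V *\<^sub>v x = (transpose_mat V * M) *\<^sub>v (V *\<^sub>v x)"
      by (rule assoc_mult_mat_vec[of _ n k _ n]) (use VC MC x in auto)
    also have "\<dots> = transpose_mat V *\<^sub>v (M *\<^sub>v (V *\<^sub>v x))"
      by (rule assoc_mult_mat_vec[of _ n k _ k]) (use VC MC x in auto)
    finally show ?thesis unfolding Y_def .
  qed
  have qY: "x \<bullet> (Y *\<^sub>v x) = (V *\<^sub>v x) \<bullet> (M *\<^sub>v (V *\<^sub>v x))" if x: "x \<in> carrier_vec n" for x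
  proof -
    have wC: "M *\<^sub>v (V *\<^sub>v x) \<in> carrier_vec k" using MC VC x by simp
    have "x \<bullet> (Y *\<^sub>v x) = (transpose_mat V *\<^sub>v (M *\<^sub>v (V *\<^sub>v x))) \<bullet> x"
      unfolding Yx[OF x] by (rule comm_scalar_prod[OF x]) (use VTC wC in simp)
    also have "\<dots> = (M *\<^sub>v (V *\<^sub>v x)) \<bullet> (V *\<^sub>v x)"
      by (rule transpose_vec_mult_scalar[OF VC x wC])
    also have "\<dots> = (V *\<^sub>v x) \<bullet> (M *\<^sub>v (V *\<^sub>v x))"
      by (rule comm_scalar_prod[OF wC]) (use VC x in simp)
    finally show ?thesis .
  qed
  have YT: "transpose_mat Y = Y"
  proof -
    have "transpose_mat Y = transpose_mat V * transpose_mat (transpose_mat V * M)"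
      unfolding Y_def by (rule transpose_mult[of _ n k]) (use VC MC in simp_all)
    also have "transpose_mat (transpose_mat V * M) = transpose_mat M * V"
      by (subst transpose_mult[of _ n k _ k]) (use VC MC in simp_all)
    also have "transpose_mat V * (transpose_mat M * V) = Y"
      unfolding Y_def MT using VC MC by (simp add: assoc_mult_mat[of _ n k _ k _ n])
    finally show ?thesis .
  qed
  have Ysym: "Y $$ (i, j) = Y $$ (j, i)" if "i < n" "j < n" for i j
  proof -
    have "transpose_mat Y $$ (i, j) = Y $$ (j, i)" using that YC by simp
    then show ?thesis using YT by simp
  qed
  have psdY: "psd n Y" unfolding psd_def
  proof (intro conjI ballI)
    fix x :: "real vec" assume x: "x \<in> carrier_vec n"
    have "V *\<^sub>v x \<in> carrier_vec k" using VC x by simp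
    then show "0 \<le> x \<bullet> (Y *\<^sub>v x)" unfolding qY[OF x] using psdM unfolding psd_def by auto
  qed (use YC YT in auto)
  have qf1: "qf n (\<lambda>i j. Y $$ (i, j)) (\<lambda>l. x $ l) = 1" if I: "I \<in> P" and x: "x \<in> sphere_on n I" for I x
  proof -
    have xC: "x \<in> carrier_vec n" using x unfolding sphere_on_def by auto
    show ?thesis using quad_eq[OF YC xC] qY[OF xC] sph[OF I x] by simp
  qed
  have diag: "Y $$ (i, i) = 1" if I: "I \<in> P" and i: "i \<in> I" for I i
  proof -
    have iN: "i < n" using block_sub[OF part I] i by auto
    have "unit_vec n i \<in> sphere_on n I" unfolding sphere_on_def using iN i by auto
    from qf1[OF I this] have "qf n (\<lambda>i j. Y $$ (i, j)) (\<lambda>l. if l = i then 1 else 0) = 1"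
      by (subst (asm) qf_cong[where y="\<lambda>l. if l = i then 1 else 0"]) (use iN in auto)
    then show ?thesis unfolding qf_one[OF iN] by simp
  qed
  have offd: "Y $$ (i, j) = 0" if I: "I \<in> P" and i: "i \<in> I" and j: "j \<in> I" and ij: "i \<noteq> j" for I i j
  proof -
    have iN: "i < n" and jN: "j < n" using block_sub[OF part I] i j by auto
    define c :: real where "c = sqrt (1/2)"
    have cc: "c * c = 1/2" unfolding c_def by (simp add: real_sqrt_mult_self)
    define x where "x = vec n (\<lambda>l. if l = i then c else if l = j then c else 0)"
    have xC: "x \<in> carrier_vec n" unfolding x_def by simp
    have "x \<bullet> x = (\<Sum>l<n. (if l = i then c else if l = j then c else 0) * x $ l)"
      using xC by (simp add: dot_eq[of _ n] x_def)
    also have "\<dots> = c * x $ i + c * x $ j" by (rule sum_two[OF iN jN ij])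
    also have "\<dots> = 1" using iN jN ij cc by (simp add: x_def)
    finally have "x \<in> sphere_on n I" unfolding sphere_on_def using xC i j by (auto simp: x_def)
    from qf1[OF I this] have "qf n (\<lambda>i j. Y $$ (i, j)) (\<lambda>l. if l = i then c else if l = j then c else 0) = 1"
      by (subst (asm) qf_cong[where y="\<lambda>l. if l = i then c else if l = j then c else 0"]) (auto simp: x_def)
    then have "c * c * Y $$ (i, i) + c * c * Y $$ (i, j) + c * c * Y $$ (j, i) + c * c * Y $$ (j, j) = 1"
      unfolding qf_two[OF iN jN ij] .
    then show ?thesis using diag[OF I i] diag[OF I j] Ysym[OF iN jN] cc by simp
  qed
  have ell: "Y \<in> elliptope n P" unfolding elliptope_def using psdY diag offd by auto
  have kerU: "U \<subseteq> mat_kernel Y"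
  proof
    fix u assume u: "u \<in> U"
    have uC: "u \<in> carrier_vec n" using u U unfolding is_subspace_def by auto
    have Vu: "V *\<^sub>v u = 0\<^sub>v k"
    proof (rule eq_vecI)
      fix r assume "r < dim_vec (0\<^sub>v k :: real vec)"
      then have r: "r < k" by simp
      have "transpose_mat V *\<^sub>v unit_vec k r \<in> row_space k V" unfolding row_space_def by auto
      then have "(transpose_mat V *\<^sub>v unit_vec k r) \<bullet> u = 0" using u unfolding rs orth_compl_def by auto
      moreover have "(transpose_mat V *\<^sub>v unit_vec k r) \<bullet> u = unit_vec k r \<bullet> (V *\<^sub>v u)"
        by (rule transpose_vec_mult_scalar[OF VC uC]) simp
      moreover have "unit_vec k r \<bullet> (V *\<^sub>v u) = (V *\<^sub>v u) $ r" using r VC uC by simp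
      ultimately show "(V *\<^sub>v u) $ r = (0\<^sub>v k :: real vec) $ r" using r by simp
    qed (use VC in simp)
    have "Y *\<^sub>v u = 0\<^sub>v n" unfolding Yx[OF uC] Vu using mv_zero[OF MC] mv_zero[OF VTC] by simp
    then show "u \<in> mat_kernel Y" unfolding mat_kernel_def using uC YC by simp
  qed
  show ?thesis unfolding realizable_def using ell kerU by auto
qed


lemma mtrace_eq: "A \<in> carrier_mat n n \<Longrightarrow> mtrace A = (\<Sum>i<n. A $$ (i, i))"
  unfolding mtrace_def by (simp add: atLeast0LessThan)

lemma real_rec:
  assumes part: "partition_on {0..<n} P" and U: "is_subspace n U" and R: "realizable n P U"
  shows "recoverable n P U"
  unfolding recoverable_def
proof (intro allI impI)
  fix B L
  assume Bb: "block_diag n P B" and BT: "transpose_mat B = B" and psdL: "psd n L" and cs: "col_space n L = U"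
  obtain Y where Y: "Y \<in> elliptope n P" and ker: "U \<subseteq> mat_kernel Y" using R unfolding realizable_def by auto
  have psdY: "psd n Y" using Y unfolding elliptope_def by auto
  have YC: "Y \<in> carrier_mat n n" using psdY unfolding psd_def by auto
  have LC: "L \<in> carrier_mat n n" using psdL unfolding psd_def by auto
  have BC: "B \<in> carrier_mat n n" using Bb unfolding block_diag_def by auto
  have Yblk: "Y $$ (i, j) = (if i = j then 1 else 0)" if "blk P i j" for i j
    using Y that unfolding elliptope_def blk_def by auto
  have YL: "(\<Sum>j<n. Y $$ (i, j) * L $$ (j, l)) = 0" if i: "i < n" and l: "l < n" for i l
  proof -
    have "L *\<^sub>v unit_vec n l \<in> col_space n L" unfolding col_space_def by auto
    then have "L *\<^sub>v unit_vec n l \<in> mat_kernel Y" using cs ker by auto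
    then have "Y *\<^sub>v (L *\<^sub>v unit_vec n l) = 0\<^sub>v n" unfolding mat_kernel_def using YC by auto
    then have "(Y *\<^sub>v (L *\<^sub>v unit_vec n l)) $ i = 0" using i by simp
    moreover have "(Y *\<^sub>v (L *\<^sub>v unit_vec n l)) $ i = (\<Sum>j<n. Y $$ (i, j) * (L *\<^sub>v unit_vec n l) $ j)"
      by (rule mat_vec_gen[OF YC i]) (use LC in simp)
    moreover have "(L *\<^sub>v unit_vec n l) $ j = L $$ (j, l)" if "j < n" for j
    proof -
      have "(L *\<^sub>v unit_vec n l) $ j = (\<Sum>m<n. L $$ (j, m) * unit_vec n l $ m)"
        by (rule mat_vec_gen[OF LC that]) simp
      also have "\<dots> = (\<Sum>m<n. if m = l then L $$ (j, l) else 0)" using l by (intro sum.cong refl) auto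
      finally show ?thesis using l by simp
    qed
    ultimately show ?thesis by simp
  qed
  obtain y where y: "\<And>i j. i < n \<Longrightarrow> j < n \<Longrightarrow> Y $$ (i, j) = (\<Sum>k<n. y k i * y k j)"
    using psdf_gram[OF psd_psdf[OF psdY]] by blast
  show "bmtfa_unique_opt n P (B + L) B L"
    unfolding bmtfa_unique_opt_def bmtfa_feasible_def
  proof (intro conjI allI impI)
    show "B + L = B + L" "psd n L" "block_diag n P B" by (fact refl psdL Bb)+
  next
    fix B' L' assume "B + L = B' + L' \<and> psd n L' \<and> block_diag n P B'" and neq: "(B', L') \<noteq> (B, L)"
    then have eq: "B + L = B' + L'" and psdL': "psd n L'" and Bb': "block_diag n P B'" by auto
    have L'C: "L' \<in> carrier_mat n n" using psdL' unfolding psd_def by auto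
    have B'C: "B' \<in> carrier_mat n n" using Bb' unfolding block_diag_def by auto
    have eqe: "B $$ (i, j) + L $$ (i, j) = B' $$ (i, j) + L' $$ (i, j)" if "i < n" "j < n" for i j
    proof -
      have "(B + L) $$ (i, j) = (B' + L') $$ (i, j)" using eq by simp
      then show ?thesis using that BC LC B'C L'C by simp
    qed
    define d where "d i j = L' $$ (i, j) - L $$ (i, j)" for i j
    have dblk: "d i j = 0" if "i < n" "j < n" "\<not> blk P i j" for i j
      using Bb Bb' that eqe[OF that(1,2)] unfolding block_diag_def blk_def d_def by auto
    have symL: "L $$ (i, j) = L $$ (j, i)" if "i < n" "j < n" for i j using psd_sym[OF psdL] that by auto
    have symL': "L' $$ (i, j) = L' $$ (j, i)" if "i < n" "j < n" for i j using psd_sym[OF psdL'] that by auto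
    have symY: "Y $$ (i, j) = Y $$ (j, i)" if "i < n" "j < n" for i j using psd_sym[OF psdY] that by auto
    define T where "T = (\<Sum>i<n. \<Sum>j<n. Y $$ (i, j) * L' $$ (i, j))"
    have T_eq: "T = (\<Sum>k<n. qf n (\<lambda>i j. L' $$ (i, j)) (y k))"
    proof -
      have "T = (\<Sum>i<n. \<Sum>j<n. \<Sum>k<n. y k i * L' $$ (i, j) * y k j)"
        unfolding T_def by (intro sum.cong refl) (simp add: y sum_distrib_left sum_distrib_right mult_ac)
      also have "\<dots> = (\<Sum>i<n. \<Sum>k<n. \<Sum>j<n. y k i * L' $$ (i, j) * y k j)"
        by (rule sum.cong[OF refl], rule sum.swap)
      also have "\<dots> = (\<Sum>k<n. \<Sum>i<n. \<Sum>j<n. y k i * L' $$ (i, j) * y k j)"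
        by (rule sum.swap)
      finally show ?thesis unfolding qf_def .
    qed
    have qnn: "\<And>k. 0 \<le> qf n (\<lambda>i j. L' $$ (i, j)) (y k)" using psd_psdf[OF psdL'] unfolding psdf_def by auto
    have T0: "0 \<le> T" unfolding T_eq by (intro sum_nonneg) (use qnn in auto)
    have YL0: "(\<Sum>i<n. \<Sum>j<n. Y $$ (i, j) * L $$ (i, j)) = 0"
    proof -
      have "(\<Sum>i<n. \<Sum>j<n. Y $$ (i, j) * L $$ (i, j)) = (\<Sum>i<n. \<Sum>j<n. Y $$ (i, j) * L $$ (j, i))"
        by (intro sum.cong refl) (simp add: symL)
      also have "\<dots> = 0" using YL by simp
      finally show ?thesis .
    qed
    have tr: "mtrace L' - mtrace L = T"
    proof -
      have "mtrace L' - mtrace L = (\<Sum>i<n. d i i)"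
        unfolding mtrace_eq[OF LC] mtrace_eq[OF L'C] d_def by (simp add: sum_subtractf)
      also have "\<dots> = (\<Sum>i<n. \<Sum>j<n. if j = i then d i i else 0)" by simp
      also have "\<dots> = (\<Sum>i<n. \<Sum>j<n. Y $$ (i, j) * d i j)"
      proof (intro sum.cong refl)
        fix i j assume i: "i \<in> {..<n}" and j: "j \<in> {..<n}"
        show "(if j = i then d i i else 0) = Y $$ (i, j) * d i j"
        proof (cases "blk P i j")
          case True then show ?thesis using Yblk by auto
        next
          case False
          then have "i \<noteq> j" using blk_refl[OF part, of i] i by auto
          then show ?thesis using dblk[OF _ _ False] i j by auto
        qed
      qed
      also have "\<dots> = T - (\<Sum>i<n. \<Sum>j<n. Y $$ (i, j) * L $$ (i, j))"
        unfolding T_def d_def by (simp add: sum_subtractf algebra_simps)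
      finally show ?thesis using YL0 by simp
    qed
    show "mtrace L < mtrace L'"
    proof (rule ccontr)
      assume "\<not> mtrace L < mtrace L'"
      then have "T = 0" using tr T0 by simp
      then have qz: "qf n (\<lambda>i j. L' $$ (i, j)) (y k) = 0" if "k < n" for k
        using that unfolding T_eq by (subst (asm) sum_nonneg_eq_0_iff) (use qnn in auto)
      have L'y: "(\<Sum>j<n. L' $$ (i, j) * y k j) = 0" if "i < n" "k < n" for i k
        using psdf_null[OF psd_psdf[OF psdL'] qz[OF that(2)] that(1)] .
      have dY: "(\<Sum>j<n. d i j * Y $$ (j, l)) = 0" if i: "i < n" and l: "l < n" for i l
      proof -
        have "(\<Sum>j<n. L' $$ (i, j) * Y $$ (j, l)) = (\<Sum>j<n. \<Sum>k<n. L' $$ (i, j) * y k j * y k l)"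
          by (intro sum.cong refl) (simp add: y l sum_distrib_left algebra_simps)
        also have "\<dots> = (\<Sum>k<n. \<Sum>j<n. L' $$ (i, j) * y k j * y k l)" by (rule sum.swap)
        also have "\<dots> = (\<Sum>k<n. (\<Sum>j<n. L' $$ (i, j) * y k j) * y k l)"
          by (simp add: sum_distrib_right)
        also have "\<dots> = 0" using L'y[OF i] by simp
        finally have a: "(\<Sum>j<n. L' $$ (i, j) * Y $$ (j, l)) = 0" .
        have "(\<Sum>j<n. L $$ (i, j) * Y $$ (j, l)) = (\<Sum>j<n. Y $$ (l, j) * L $$ (j, i))"
          by (intro sum.cong refl) (simp add: symL[OF i] symY[OF _ l] mult.commute)
        also have "\<dots> = 0" using YL[OF l i] .
        finally have b: "(\<Sum>j<n. L $$ (i, j) * Y $$ (j, l)) = 0" .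
        show ?thesis using a b unfolding d_def by (simp add: algebra_simps sum_subtractf)
      qed
      have d0: "d i l = 0" if i: "i < n" and l: "l < n" for i l
      proof (cases "blk P i l")
        case False then show ?thesis using dblk i l by auto
      next
        case True
        have "(\<Sum>j<n. d i j * Y $$ (j, l)) = (\<Sum>j<n. if j = l then d i l else 0)"
        proof (intro sum.cong refl)
          fix j assume j: "j \<in> {..<n}"
          show "d i j * Y $$ (j, l) = (if j = l then d i l else 0)"
          proof (cases "blk P i j")
            case True
            then have "blk P j l" using blk_trans[OF part True \<open>blk P i l\<close>] by simp
            then show ?thesis using Yblk by auto
          next
            case False
            then have "j \<noteq> l" using True by auto
            then show ?thesis using dblk[OF i _ False] j by auto
          qed
        qed
        then show ?thesis using dY[OF i l] l by simp
      qed
      have "L' = L" using d0 L'C LC unfolding d_def by (intro eq_matI) auto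
      moreover have "B' = B"
        using eqe d0 BC B'C unfolding d_def by (intro eq_matI) (auto simp: algebra_simps)
      ultimately show False using neq by simp
    qed
  qed
qed


lemma cont_coord[continuous_intros]: "continuous_on S (\<lambda>f::'a \<Rightarrow> real. f p)"
  by (rule continuous_on_subset[OF continuous_on_product_coordinates]) auto

lemma closed_imp_eq0:
  assumes "continuous_on UNIV h"
  shows "closed {f. c \<longrightarrow> h f = (0::real)}"
proof (cases c)
  case True
  then show ?thesis using closed_Collect_eq[OF assms continuous_on_const] by simp
next
  case False then show ?thesis by simp
qed

definition Cset :: "nat \<Rightarrow> (nat \<Rightarrow> nat \<Rightarrow> real) \<Rightarrow> real \<Rightarrow> (nat \<times> nat \<Rightarrow> real) set" where
  "Cset n p T = {f. (\<forall>i j. (n \<le> i \<or> n \<le> j) \<longrightarrow> f (i, j) = 0) \<and> (\<forall>i j. f (i, j) = f (j, i)) \<and>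
     (\<forall>x. 0 \<le> qf n (\<lambda>i j. f (i, j)) x) \<and> (\<forall>i l. (\<Sum>j<n. f (i, j) * p j l) = 0) \<and>
     (\<Sum>i<n. f (i, i)) \<le> T}"

lemma closed_Cset: "closed (Cset n p T)"
proof -
  have c1: "closed {f::nat \<times> nat \<Rightarrow> real. \<forall>i j. (n \<le> i \<or> n \<le> j) \<longrightarrow> f (i, j) = 0}"
    by (intro closed_Collect_all closed_imp_eq0 continuous_intros)
  have c2: "closed {f::nat \<times> nat \<Rightarrow> real. \<forall>i j. f (i, j) = f (j, i)}"
    by (intro closed_Collect_all closed_Collect_eq continuous_intros)
  have c3: "closed {f::nat \<times> nat \<Rightarrow> real. \<forall>x. 0 \<le> qf n (\<lambda>i j. f (i, j)) x}"
    unfolding qf_def by (intro closed_Collect_all closed_Collect_le continuous_intros)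
  have c4: "closed {f::nat \<times> nat \<Rightarrow> real. \<forall>i l. (\<Sum>j<n. f (i, j) * p j l) = 0}"
    by (intro closed_Collect_all closed_Collect_eq continuous_intros)
  have c5: "closed {f::nat \<times> nat \<Rightarrow> real. (\<Sum>i<n. f (i, i)) \<le> T}"
    by (intro closed_Collect_le continuous_intros)
  have "Cset n p T = {f. \<forall>i j. (n \<le> i \<or> n \<le> j) \<longrightarrow> f (i, j) = 0} \<inter> {f. \<forall>i j. f (i, j) = f (j, i)}
     \<inter> {f. \<forall>x. 0 \<le> qf n (\<lambda>i j. f (i, j)) x} \<inter> {f. \<forall>i l. (\<Sum>j<n. f (i, j) * p j l) = 0}
     \<inter> {f. (\<Sum>i<n. f (i, i)) \<le> T}"
    unfolding Cset_def by auto
  then show ?thesis using c1 c2 c3 c4 c5 by (simp add: closed_Int)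
qed

lemma compact_box: "compact (PiE (UNIV::(nat\<times>nat) set) (\<lambda>_. {-(T::real)..T}))"
  using compactin_PiE[of "\<lambda>_. euclidean" UNIV "\<lambda>_. {-(T::real)..T}"]
  by (simp add: euclidean_product_topology compactin_subtopology)

lemma Cset_psdf: "f \<in> Cset n p T \<Longrightarrow> psdf n (\<lambda>i j. f (i, j))"
  unfolding Cset_def psdf_def by auto

lemma Cset_box:
  assumes f: "f \<in> Cset n p T"
  shows "f \<in> PiE UNIV (\<lambda>_. {-T..T})"
proof -
  have ps: "psdf n (\<lambda>i j. f (i, j))" using Cset_psdf[OF f] .
  have tr: "(\<Sum>i<n. f (i, i)) \<le> T" using f unfolding Cset_def by auto
  have dg: "0 \<le> f (i, i)" if "i < n" for i using psdf_diag[OF ps that] by simp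
  have dle: "f (i, i) \<le> T" if "i < n" for i
  proof -
    have "f (i, i) \<le> (\<Sum>k<n. f (k, k))" by (rule member_le_sum) (use that dg in auto)
    then show ?thesis using tr by simp
  qed
  have "0 \<le> (\<Sum>i<n. f (i, i))" by (rule sum_nonneg) (use dg in auto)
  then have T0: "0 \<le> T" using tr by linarith
  have "\<bar>f (i, j)\<bar> \<le> T" for i j
  proof (cases "i < n \<and> j < n")
    case True
    then show ?thesis using psdf_offdiag[OF ps, of i j] dle[of i] dle[of j] by auto
  next
    case False
    then have "f (i, j) = 0" using f unfolding Cset_def by auto
    then show ?thesis using T0 by simp
  qed
  then have "f (i, j) \<in> {-T..T}" for i j
    using abs_le_D1[of "f (i, j)" T] abs_le_D2[of "f (i, j)" T] by auto
  then show ?thesis by (auto simp: PiE_iff)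
qed

lemma min_exists:
  fixes g :: "(nat \<times> nat \<Rightarrow> real) \<Rightarrow> real"
  assumes "continuous_on UNIV g" "0 \<le> T"
  shows "\<exists>f0\<in>Cset n p T. \<forall>f\<in>Cset n p T. g f0 \<le> g f"
proof -
  let ?K = "PiE UNIV (\<lambda>_. {-T..T}) \<inter> Cset n p T"
  have K: "?K = Cset n p T" using Cset_box by blast
  have "compact ?K" by (rule compact_Int_closed[OF compact_box closed_Cset])
  moreover have "(\<lambda>_. 0) \<in> Cset n p T" unfolding Cset_def qf_def using assms(2) by auto
  ultimately have "\<exists>f0\<in>?K. \<forall>f\<in>?K. g f0 \<le> g f"
    using K by (intro continuous_attains_inf continuous_on_subset[OF assms(1)]) auto
  then show ?thesis using K by simp
qed


lemma first_order:
  fixes a b t0 :: real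
  assumes h: "\<And>t. 0 < t \<Longrightarrow> t \<le> t0 \<Longrightarrow> 0 \<le> 2 * t * a + t * t * b" and t0: "0 < t0" and b: "0 \<le> b"
  shows "0 \<le> a"
proof (rule ccontr)
  assume "\<not> 0 \<le> a"
  then have a: "a < 0" by simp
  define t where "t = min t0 (- a / (b + 1))"
  have "0 < - a / (b + 1)" using a b by (intro divide_pos_pos) auto
  then have tpos: "0 < t" unfolding t_def using t0 by simp
  have tle: "t \<le> t0" "t \<le> - a / (b + 1)" unfolding t_def by auto
  have "t * b \<le> - a / (b + 1) * b" by (rule mult_right_mono[OF tle(2) b])
  also have "\<dots> = - a * (b / (b + 1))" by simp
  also have "\<dots> < - a * 1" using a b by (intro mult_strict_left_mono) auto
  finally have "t * b < - a" by simp
  then have "2 * a + t * b < 0" using a by linarith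
  then have "t * (2 * a + t * b) < 0" using tpos by (simp add: mult_pos_neg)
  moreover have "0 \<le> t * (2 * a + t * b)" using h[OF tpos tle(1)] by (simp add: algebra_simps)
  ultimately show False by simp
qed

lemma qf_lin: "qf n (\<lambda>i j. \<alpha> * a i j + \<beta> * b i j) x = \<alpha> * qf n a x + \<beta> * qf n b x"
  unfolding qf_def by (simp add: algebra_simps sum.distrib sum_distrib_left)

lemma comp_le:
  fixes u :: "nat \<Rightarrow> real"
  assumes "i < n"
  shows "\<bar>u i\<bar> \<le> sqrt (\<Sum>k<n. u k * u k)"
proof -
  have "u i * u i \<le> (\<Sum>k<n. u k * u k)" by (rule member_le_sum) (use assms in auto)
  then have "sqrt (u i * u i) \<le> sqrt (\<Sum>k<n. u k * u k)" by (rule real_sqrt_le_mono)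
  then show ?thesis by (simp add: real_sqrt_mult_self)
qed

lemma bil_bound:
  fixes u v :: "nat \<Rightarrow> real"
  assumes "\<And>i. i < n \<Longrightarrow> \<bar>u i\<bar> \<le> a" "\<And>j. j < n \<Longrightarrow> \<bar>v j\<bar> \<le> b"
  shows "\<bar>\<Sum>i<n. \<Sum>j<n. u i * d i j * v j\<bar> \<le> (\<Sum>i<n. \<Sum>j<n. \<bar>d i j\<bar>) * a * b"
proof -
  have "\<bar>\<Sum>i<n. \<Sum>j<n. u i * d i j * v j\<bar> \<le> (\<Sum>i<n. \<bar>\<Sum>j<n. u i * d i j * v j\<bar>)" by (rule sum_abs)
  also have "\<dots> \<le> (\<Sum>i<n. \<Sum>j<n. \<bar>u i * d i j * v j\<bar>)" by (intro sum_mono sum_abs)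
  also have "\<dots> \<le> (\<Sum>i<n. \<Sum>j<n. \<bar>d i j\<bar> * (a * b))"
  proof (intro sum_mono)
    fix i j assume i: "i \<in> {..<n}" and j: "j \<in> {..<n}"
    have "\<bar>u i\<bar> * \<bar>v j\<bar> \<le> a * b"
      using assms(1)[of i] assms(2)[of j] i j by (intro mult_mono) auto
    then have "\<bar>d i j\<bar> * (\<bar>u i\<bar> * \<bar>v j\<bar>) \<le> \<bar>d i j\<bar> * (a * b)" by (intro mult_left_mono) auto
    then show "\<bar>u i * d i j * v j\<bar> \<le> \<bar>d i j\<bar> * (a * b)" by (simp add: abs_mult algebra_simps)
  qed
  also have "\<dots> = (\<Sum>i<n. \<Sum>j<n. \<bar>d i j\<bar>) * (a * b)" by (simp add: sum_distrib_right)
  also have "\<dots> = (\<Sum>i<n. \<Sum>j<n. \<bar>d i j\<bar>) * a * b" by simp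
  finally show ?thesis .
qed

lemma final_ineq:
  fixes a b S \<epsilon> c :: real
  assumes "0 < \<epsilon>" "c = S + S^2 / \<epsilon> + 1" "0 \<le> a"
  shows "0 \<le> c * a^2 - S * a^2 - 2 * S * a * b + \<epsilon> * b^2"
proof -
  have "0 \<le> (S * a - \<epsilon> * b)^2" by simp
  then have "0 \<le> ((S * a - \<epsilon> * b)^2) / \<epsilon>" using assms(1) by simp
  also have "((S * a - \<epsilon> * b)^2) / \<epsilon> = S^2 / \<epsilon> * a^2 - 2 * S * a * b + \<epsilon> * b^2"
    using assms(1) by (simp add: power2_eq_square field_simps)
  finally have "0 \<le> S^2 / \<epsilon> * a^2 - 2 * S * a * b + \<epsilon> * b^2" .
  moreover have "0 \<le> a^2" by simp
  moreover have "c * a^2 - S * a^2 - 2 * S * a * b + \<epsilon> * b^2 = (S^2 / \<epsilon> * a^2 - 2 * S * a * b + \<epsilon> * b^2) + a^2"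
    unfolding assms(2) by (simp add: algebra_simps)
  ultimately show ?thesis by linarith
qed

lemma qfP:
  assumes pr: "projm n U Pm" and U: "is_subspace n U" and x: "x \<in> carrier_vec n"
  shows "qf n (\<lambda>i j. Pm $$ (i, j)) (\<lambda>i. x $ i) = (Pm *\<^sub>v x) \<bullet> (Pm *\<^sub>v x)"
proof -
  have PC: "Pm \<in> carrier_mat n n" using pr unfolding projm_def by auto
  have PxC: "Pm *\<^sub>v x \<in> carrier_vec n" using PC x by simp
  have PxU: "Pm *\<^sub>v x \<in> U" using pr x unfolding projm_def by auto
  have "(x - Pm *\<^sub>v x) \<bullet> (Pm *\<^sub>v x) = 0" using pr x PxU unfolding projm_def by auto
  moreover have "(x - Pm *\<^sub>v x) \<bullet> (Pm *\<^sub>v x) = x \<bullet> (Pm *\<^sub>v x) - (Pm *\<^sub>v x) \<bullet> (Pm *\<^sub>v x)"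
    using PxC x by (simp add: minus_scalar_prod_distrib)
  ultimately show ?thesis using quad_eq[OF PC x] by simp
qed

lemma schur:
  fixes D :: "nat \<Rightarrow> nat \<Rightarrow> real"
  assumes pr: "projm n U Pm" and U: "is_subspace n U" and eps: "0 < \<epsilon>"
    and Dw: "\<And>w. w \<in> orth_compl n U \<Longrightarrow> \<epsilon> * (\<Sum>i<n. w $ i * w $ i) \<le> qf n D (\<lambda>i. w $ i)"
    and S: "S = (\<Sum>i<n. \<Sum>j<n. \<bar>D i j\<bar>)" and c: "c = S + S^2 / \<epsilon> + 1"
    and x: "x \<in> carrier_vec n"
  shows "0 \<le> c * qf n (\<lambda>i j. Pm $$ (i, j)) (\<lambda>i. x $ i) + qf n D (\<lambda>i. x $ i)"
proof -
  have PC: "Pm \<in> carrier_mat n n" using pr unfolding projm_def by auto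
  define u where "u = Pm *\<^sub>v x"
  define w where "w = x - u"
  have uC: "u \<in> carrier_vec n" unfolding u_def using PC x by simp
  have wO: "w \<in> orth_compl n U" unfolding w_def u_def by (rule proj_minus_perp[OF pr x])
  have xi: "x $ i = u $ i + 1 * w $ i" if "i < n" for i
    unfolding w_def using that uC x by simp
  define A where "A = (\<Sum>i<n. u $ i * u $ i)"
  define B where "B = (\<Sum>i<n. w $ i * w $ i)"
  define a where "a = sqrt A"
  define b where "b = sqrt B"
  have A0: "0 \<le> A" unfolding A_def by (intro sum_nonneg) auto
  have B0: "0 \<le> B" unfolding B_def by (intro sum_nonneg) auto
  have aa: "a^2 = A" unfolding a_def by (rule real_sqrt_pow2[OF A0])
  have bb: "b^2 = B" unfolding b_def by (rule real_sqrt_pow2[OF B0])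
  have a0: "0 \<le> a" unfolding a_def using A0 by simp
  have ua: "\<bar>u $ i\<bar> \<le> a" if "i < n" for i unfolding a_def A_def by (rule comp_le[OF that])
  have wb: "\<bar>w $ i\<bar> \<le> b" if "i < n" for i unfolding b_def B_def by (rule comp_le[OF that])
  have qP: "qf n (\<lambda>i j. Pm $$ (i, j)) (\<lambda>i. x $ i) = A"
    unfolding qfP[OF pr U x] u_def[symmetric] A_def using uC by (simp add: dot_eq[of _ n])
  have qD: "qf n D (\<lambda>i. x $ i) = qf n D (\<lambda>i. u $ i) + (\<Sum>i<n. \<Sum>j<n. w $ i * D i j * u $ j)
      + (\<Sum>i<n. \<Sum>j<n. u $ i * D i j * w $ j) + qf n D (\<lambda>i. w $ i)"
  proof -
    have "qf n D (\<lambda>i. x $ i) = qf n D (\<lambda>i. u $ i + 1 * w $ i)" by (rule qf_cong) (simp add: xi)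
    also have "\<dots> = qf n D (\<lambda>i. u $ i) + (\<Sum>i<n. \<Sum>j<n. w $ i * D i j * u $ j)
      + (\<Sum>i<n. \<Sum>j<n. u $ i * D i j * w $ j) + qf n D (\<lambda>i. w $ i)"
      using qf_add_scale[of n D "\<lambda>i. u $ i" 1 "\<lambda>i. w $ i"] by simp
    finally show ?thesis .
  qed
  have b1: "\<bar>qf n D (\<lambda>i. u $ i)\<bar> \<le> S * a * a" unfolding qf_def S by (rule bil_bound) (use ua in auto)
  have b2: "\<bar>\<Sum>i<n. \<Sum>j<n. w $ i * D i j * u $ j\<bar> \<le> S * b * a" unfolding S by (rule bil_bound) (use ua wb in auto)
  have b3: "\<bar>\<Sum>i<n. \<Sum>j<n. u $ i * D i j * w $ j\<bar> \<le> S * a * b" unfolding S by (rule bil_bound) (use ua wb in auto)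
  have b4: "\<epsilon> * B \<le> qf n D (\<lambda>i. w $ i)" unfolding B_def by (rule Dw[OF wO])
  have fin: "0 \<le> c * a^2 - S * a^2 - 2 * S * a * b + \<epsilon> * b^2" by (rule final_ineq[OF eps c a0])
  have "c * a^2 - S * a^2 - 2 * S * a * b + \<epsilon> * b^2 \<le> c * qf n (\<lambda>i j. Pm $$ (i, j)) (\<lambda>i. x $ i) + qf n D (\<lambda>i. x $ i)"
    unfolding qP qD aa[symmetric] bb[symmetric] using b1 b2 b3 b4 aa bb
    by (simp add: power2_eq_square abs_le_iff algebra_simps)
  then show ?thesis using fin by linarith
qed


lemma qf_scale: "qf n (\<lambda>i j. \<alpha> * a i j) x = \<alpha> * qf n a x"
  unfolding qf_def by (simp add: sum_distrib_left mult_ac)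

lemma mat_qf: "qf n (\<lambda>i j. mat n n f $$ (i, j)) x = qf n (\<lambda>i j. f (i, j)) x"
  unfolding qf_def by (intro sum.cong refl) auto

lemma qf_vec: "qf n a (\<lambda>i. vec n x $ i) = qf n a x"
  by (rule qf_cong) simp

lemma rec_real:
  assumes part: "partition_on {0..<n} P" and U: "is_subspace n U" and Rc: "recoverable n P U"
  shows "realizable n P U"
proof -
  obtain Pm where pr: "projm n U Pm" using proj_ex[OF U] by auto
  have PC: "Pm \<in> carrier_mat n n" using pr unfolding projm_def by auto
  have UC: "U \<subseteq> carrier_vec n" using U unfolding is_subspace_def by auto
  have PU: "\<And>x. x \<in> carrier_vec n \<Longrightarrow> Pm *\<^sub>v x \<in> U" and Pid: "\<And>u. u \<in> U \<Longrightarrow> Pm *\<^sub>v u = u"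
    using pr unfolding projm_def by auto
  define p where "p i j = (if i < n \<and> j < n then Pm $$ (i, j) else 0)" for i j
  have pcol: "(Pm *\<^sub>v unit_vec n l) $ j = p j l" if j: "j < n" and l: "l < n" for j l
  proof -
    have "(Pm *\<^sub>v unit_vec n l) $ j = (\<Sum>m<n. Pm $$ (j, m) * unit_vec n l $ m)"
      by (rule mat_vec_gen[OF PC j]) simp
    also have "\<dots> = (\<Sum>m<n. if m = l then Pm $$ (j, l) else 0)" using l by (intro sum.cong refl) auto
    finally show ?thesis using l j by (simp add: p_def)
  qed
  have Pu: "(Pm *\<^sub>v u) $ j = (\<Sum>l<n. p j l * u $ l)" if u: "u \<in> carrier_vec n" and j: "j < n" for u j
    using mat_vec_gen[OF PC j u] j by (simp add: p_def)
  define w where "w i j = (if blk P i j then 1 else 0 :: real)" for i j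
  define dl where "dl i j = (if i = j then 1 else 0 :: real)" for i j :: nat
  define g where "g f = (\<Sum>i<n. \<Sum>j<n. w i j * (f (i, j) - dl i j)^2)" for f :: "nat \<times> nat \<Rightarrow> real"
  define T where "T = 2 * real n + 1"
  have gc: "continuous_on UNIV g" unfolding g_def by (intro continuous_intros)
  obtain f0 where f0C: "f0 \<in> Cset n p T" and f0min: "\<And>f. f \<in> Cset n p T \<Longrightarrow> g f0 \<le> g f"
    using min_exists[OF gc, of T n p] T_def by auto
  from f0C have f0out: "\<And>i j. n \<le> i \<or> n \<le> j \<Longrightarrow> f0 (i, j) = 0" and f0sym: "\<And>i j. f0 (i, j) = f0 (j, i)"
    and f0ker: "\<And>i l. (\<Sum>j<n. f0 (i, j) * p j l) = 0"
    and f0tr: "(\<Sum>i<n. f0 (i, i)) \<le> T" unfolding Cset_def by auto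
  have f0psd: "psdf n (\<lambda>i j. f0 (i, j))" by (rule Cset_psdf[OF f0C])
  have f0dg: "0 \<le> f0 (i, i)" if "i < n" for i using psdf_diag[OF f0psd that] by simp
  have tr0: "0 \<le> (\<Sum>i<n. f0 (i, i))" by (intro sum_nonneg) (use f0dg in auto)
  have wii: "w i i = 1" if "i < n" for i using blk_refl[OF part that] unfolding w_def by simp
  have w0: "0 \<le> w i j" for i j unfolding w_def by simp
  have zC: "(\<lambda>_. 0) \<in> Cset n p T" unfolding Cset_def qf_def T_def by auto
  have g0: "g (\<lambda>_. 0) = real n"
  proof -
    have "g (\<lambda>_. 0) = (\<Sum>i<n. \<Sum>j<n. if j = i then 1 else 0)" unfolding g_def
      by (intro sum.cong refl) (auto simp: dl_def wii)
    also have "\<dots> = real n" by simp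
    finally show ?thesis .
  qed
  have gf0n: "g f0 \<le> real n" using f0min[OF zC] g0 by simp
  have g0le: "0 \<le> g f0" unfolding g_def by (intro sum_nonneg mult_nonneg_nonneg w0) auto
  have trb: "(\<Sum>i<n. f0 (i, i)) \<le> 2 * real n"
  proof -
    have "(\<Sum>i<n. (f0 (i, i) - 1)^2) \<le> g f0" unfolding g_def
    proof (intro sum_mono)
      fix i assume i: "i \<in> {..<n}"
      have "w i i * (f0 (i, i) - dl i i)^2 \<le> (\<Sum>j<n. w i j * (f0 (i, j) - dl i j)^2)"
        by (rule member_le_sum) (use i w0 in auto)
      then show "(f0 (i, i) - 1)^2 \<le> (\<Sum>j<n. w i j * (f0 (i, j) - dl i j)^2)" using i wii by (simp add: dl_def)
    qed
    moreover have "(\<Sum>i<n. 2 * f0 (i, i) - 3) \<le> (\<Sum>i<n. (f0 (i, i) - 1)^2)"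
    proof (intro sum_mono)
      fix i
      have "0 \<le> (f0 (i, i) - 2)^2" by simp
      then show "2 * f0 (i, i) - 3 \<le> (f0 (i, i) - 1)^2" by (simp add: power2_eq_square algebra_simps)
    qed
    moreover have "(\<Sum>i<n. 2 * f0 (i, i) - 3) = 2 * (\<Sum>i<n. f0 (i, i)) - 3 * real n"
      by (simp add: sum_subtractf sum_distrib_left)
    ultimately show ?thesis using gf0n by linarith
  qed
  define R where "R i j = w i j * (f0 (i, j) - dl i j)" for i j
  have gexp: "g (\<lambda>q. f0 q + t * m q) = g f0 + 2 * t * (\<Sum>i<n. \<Sum>j<n. R i j * m (i, j))
      + t * t * (\<Sum>i<n. \<Sum>j<n. w i j * (m (i, j))^2)" for t m
  proof -
    have "g (\<lambda>q. f0 q + t * m q) = (\<Sum>i<n. \<Sum>j<n. w i j * (f0 (i, j) - dl i j)^2 + 2 * t * (R i j * m (i, j))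
        + t * t * (w i j * (m (i, j))^2))"
      unfolding g_def R_def by (intro sum.cong refl) (simp add: power2_eq_square algebra_simps)
    also have "\<dots> = g f0 + 2 * t * (\<Sum>i<n. \<Sum>j<n. R i j * m (i, j))
      + t * t * (\<Sum>i<n. \<Sum>j<n. w i j * (m (i, j))^2)"
      unfolding g_def by (simp add: sum.distrib sum_distrib_left)
    finally show ?thesis .
  qed
  have dir: "0 \<le> (\<Sum>i<n. \<Sum>j<n. R i j * m (i, j))"
    if mem: "\<And>t. 0 < t \<Longrightarrow> t \<le> t0 \<Longrightarrow> (\<lambda>q. f0 q + t * m q) \<in> Cset n p T" and t0: "0 < t0" for m t0
  proof (rule first_order[OF _ t0])
    show "0 \<le> (\<Sum>i<n. \<Sum>j<n. w i j * (m (i, j))^2)" by (intro sum_nonneg mult_nonneg_nonneg w0) auto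
    fix t assume "0 < t" "t \<le> t0"
    from f0min[OF mem[OF this]]
    show "0 \<le> 2 * t * (\<Sum>i<n. \<Sum>j<n. R i j * m (i, j)) + t * t * (\<Sum>i<n. \<Sum>j<n. w i j * (m (i, j))^2)"
      unfolding gexp by simp
  qed
  have RF: "(\<Sum>i<n. \<Sum>j<n. R i j * f0 (i, j)) \<le> 0"
  proof -
    have "0 \<le> (\<Sum>i<n. \<Sum>j<n. R i j * (- f0 (i, j)))"
    proof (rule dir[of 1])
      fix t :: real assume t: "0 < t" "t \<le> 1"
      have e: "(\<lambda>q. f0 q + t * - f0 q) = (\<lambda>q. (1 - t) * f0 q)" by (auto simp: algebra_simps)
      show "(\<lambda>q. f0 q + t * - f0 q) \<in> Cset n p T" unfolding e Cset_def
      proof (intro CollectI conjI allI impI)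
        fix i j :: nat assume "n \<le> i \<or> n \<le> j"
        then show "(1 - t) * f0 (i, j) = 0" using f0out by simp
      next
        fix i j show "(1 - t) * f0 (i, j) = (1 - t) * f0 (j, i)" using f0sym by simp
      next
        fix x show "0 \<le> qf n (\<lambda>i j. (1 - t) * f0 (i, j)) x"
          unfolding qf_scale using t f0psd unfolding psdf_def by simp
      next
        fix i l show "(\<Sum>j<n. (1 - t) * f0 (i, j) * p j l) = 0"
          using f0ker[of i l] by (simp add: sum_distrib_left[symmetric] mult.assoc)
      next
        have "(\<Sum>i<n. (1 - t) * f0 (i, i)) = (1 - t) * (\<Sum>i<n. f0 (i, i))" by (simp add: sum_distrib_left)
        also have "\<dots> \<le> (\<Sum>i<n. f0 (i, i))" using t tr0 by (intro mult_left_le_one_le) auto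
        finally show "(\<Sum>i<n. (1 - t) * f0 (i, i)) \<le> T" using f0tr by simp
      qed
    qed simp
    then show ?thesis by (simp add: sum_negf)
  qed
  have RW: "0 \<le> (\<Sum>i<n. \<Sum>j<n. R i j * (wv $ i * wv $ j))" if wo: "wv \<in> orth_compl n U" for wv
  proof -
    have wC: "wv \<in> carrier_vec n" using wo unfolding orth_compl_def by auto
    define N where "N = (\<Sum>i<n. wv $ i * wv $ i)"
    have N0: "0 \<le> N" unfolding N_def by (intro sum_nonneg) auto
    define m where "m = (\<lambda>(i, j). if i < n \<and> j < n then wv $ i * wv $ j else 0)"
    have wp: "(\<Sum>j<n. wv $ j * p j l) = 0" for l
    proof (cases "l < n")
      case True
      have "wv \<bullet> (Pm *\<^sub>v unit_vec n l) = (\<Sum>j<n. wv $ j * (Pm *\<^sub>v unit_vec n l) $ j)"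
        by (rule dot_eq) (use PC in simp)
      also have "\<dots> = (\<Sum>j<n. wv $ j * p j l)" by (intro sum.cong refl) (simp add: pcol True)
      finally have "(\<Sum>j<n. wv $ j * p j l) = wv \<bullet> (Pm *\<^sub>v unit_vec n l)" by simp
      also have "\<dots> = 0" using wo PU[of "unit_vec n l"] unfolding orth_compl_def by auto
      finally show ?thesis .
    next
      case False then show ?thesis by (simp add: p_def)
    qed
    have "0 \<le> (\<Sum>i<n. \<Sum>j<n. R i j * m (i, j))"
    proof (rule dir[of "1 / (N + 1)"])
      fix t :: real assume t: "0 < t" "t \<le> 1 / (N + 1)"
      show "(\<lambda>q. f0 q + t * m q) \<in> Cset n p T" unfolding Cset_def
      proof (intro CollectI conjI allI impI)
        fix i j :: nat assume "n \<le> i \<or> n \<le> j"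
        then show "f0 (i, j) + t * m (i, j) = 0" using f0out by (auto simp: m_def)
      next
        fix i j show "f0 (i, j) + t * m (i, j) = f0 (j, i) + t * m (j, i)" using f0sym by (auto simp: m_def mult.commute)
      next
        fix x
        have "qf n (\<lambda>i j. m (i, j)) x = (\<Sum>i<n. x i * wv $ i) * (\<Sum>j<n. wv $ j * x j)"
          unfolding qf_def sum_product by (intro sum.cong refl) (auto simp: m_def)
        also have "\<dots> = (\<Sum>i<n. x i * wv $ i)^2" by (simp add: power2_eq_square mult.commute)
        finally have "0 \<le> qf n (\<lambda>i j. m (i, j)) x" by simp
        moreover have "qf n (\<lambda>i j. f0 (i, j) + t * m (i, j)) x = 1 * qf n (\<lambda>i j. f0 (i, j)) x + t * qf n (\<lambda>i j. m (i, j)) x"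
          using qf_lin[of n 1 "\<lambda>i j. f0 (i, j)" t "\<lambda>i j. m (i, j)" x] by simp
        moreover have "0 \<le> qf n (\<lambda>i j. f0 (i, j)) x" using f0psd unfolding psdf_def by auto
        ultimately show "0 \<le> qf n (\<lambda>i j. f0 (i, j) + t * m (i, j)) x" using t by simp
      next
        fix i l
        have "(\<Sum>j<n. (f0 (i, j) + t * m (i, j)) * p j l) = (\<Sum>j<n. f0 (i, j) * p j l) + t * (\<Sum>j<n. m (i, j) * p j l)"
          by (simp add: algebra_simps sum.distrib sum_distrib_left)
        also have "(\<Sum>j<n. m (i, j) * p j l) = (if i < n then wv $ i * (\<Sum>j<n. wv $ j * p j l) else 0)"
          by (auto simp: m_def sum_distrib_left mult.assoc intro!: sum.cong)
        finally show "(\<Sum>j<n. (f0 (i, j) + t * m (i, j)) * p j l) = 0" using f0ker wp by simp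
      next
        have "(\<Sum>i<n. f0 (i, i) + t * m (i, i)) = (\<Sum>i<n. f0 (i, i)) + t * N"
          unfolding N_def by (simp add: sum.distrib sum_distrib_left m_def)
        also have "t * N \<le> 1"
        proof -
          have "t * N \<le> 1 / (N + 1) * N" using t N0 by (intro mult_right_mono) auto
          also have "\<dots> \<le> 1" using N0 by (simp add: field_simps)
          finally show ?thesis .
        qed
        then show "(\<Sum>i<n. f0 (i, i) + t * m (i, i)) \<le> T"
          using trb unfolding T_def \<open>(\<Sum>i<n. f0 (i, i) + t * m (i, i)) = (\<Sum>i<n. f0 (i, i)) + t * N\<close> by linarith
      qed
    qed (use N0 in simp)
    also have "(\<Sum>i<n. \<Sum>j<n. R i j * m (i, j)) = (\<Sum>i<n. \<Sum>j<n. R i j * (wv $ i * wv $ j))"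
      by (intro sum.cong refl) (auto simp: m_def)
    finally show ?thesis .
  qed
  have trR: "(\<Sum>i<n. R i i) = (\<Sum>i<n. \<Sum>j<n. R i j * f0 (i, j)) - g f0"
  proof -
    have "(\<Sum>i<n. \<Sum>j<n. R i j * f0 (i, j)) - g f0 = (\<Sum>i<n. \<Sum>j<n. R i j * f0 (i, j) - w i j * (f0 (i, j) - dl i j)^2)"
      by (simp add: g_def sum_subtractf)
    also have "\<dots> = (\<Sum>i<n. \<Sum>j<n. if j = i then R i i else 0)"
      by (intro sum.cong refl) (auto simp: R_def dl_def power2_eq_square algebra_simps)
    also have "\<dots> = (\<Sum>i<n. R i i)" by simp
    finally show ?thesis by simp
  qed
  show ?thesis
  proof (cases "g f0 = 0")
    case True
    have terms: "w i j * (f0 (i, j) - dl i j)^2 = 0" if "i < n" "j < n" for i j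
    proof -
      have "\<forall>i\<in>{..<n}. (\<Sum>j<n. w i j * (f0 (i, j) - dl i j)^2) = 0"
        using True unfolding g_def by (subst sum_nonneg_eq_0_iff[symmetric]) (auto intro!: sum_nonneg mult_nonneg_nonneg w0)
      then have "(\<Sum>j<n. w i j * (f0 (i, j) - dl i j)^2) = 0" using that by auto
      then have "\<forall>j\<in>{..<n}. w i j * (f0 (i, j) - dl i j)^2 = 0"
        by (subst sum_nonneg_eq_0_iff[symmetric]) (auto intro!: mult_nonneg_nonneg w0)
      then show ?thesis using that by auto
    qed
    have fblk: "f0 (i, j) = dl i j" if b: "blk P i j" for i j
    proof -
      have "i < n" "j < n" using blk_lt[OF part b] by auto
      then have "(f0 (i, j) - dl i j)^2 = 0" using terms[of i j] b by (simp add: w_def)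
      then show ?thesis by simp
    qed
    define Y where "Y = mat n n (\<lambda>(i, j). f0 (i, j))"
    have YC: "Y \<in> carrier_mat n n" unfolding Y_def by simp
    have psdY: "psd n Y"
    proof (rule psdf_psd[OF YC])
      fix i j assume "i < n" "j < n" then show "Y $$ (i, j) = Y $$ (j, i)" unfolding Y_def using f0sym by simp
    next
      show "psdf n (\<lambda>i j. Y $$ (i, j))" unfolding psdf_def
      proof (intro conjI allI impI)
        fix i j assume "i < n" "j < n" then show "Y $$ (i, j) = Y $$ (j, i)" unfolding Y_def using f0sym by simp
      next
        fix x show "0 \<le> qf n (\<lambda>i j. Y $$ (i, j)) x" unfolding Y_def mat_qf using f0psd unfolding psdf_def by auto
      qed
    qed
    have ell: "Y \<in> elliptope n P" unfolding elliptope_def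
    proof (intro CollectI conjI ballI)
      show "psd n Y" by fact
      fix I i j assume I: "I \<in> P" and i: "i \<in> I" and j: "j \<in> I"
      have b: "blk P i j" unfolding blk_def using I i j by auto
      have "i < n" "j < n" using blk_lt[OF part b] by auto
      then show "Y $$ (i, j) = (if i = j then 1 else 0)" unfolding Y_def using fblk[OF b] by (simp add: dl_def)
    qed
    have ker: "U \<subseteq> mat_kernel Y"
    proof
      fix u assume u: "u \<in> U"
      have uC: "u \<in> carrier_vec n" using u UC by auto
      have "Y *\<^sub>v u = 0\<^sub>v n"
      proof (rule eq_vecI)
        fix i assume "i < dim_vec (0\<^sub>v n :: real vec)"
        then have i: "i < n" by simp
        have "(Y *\<^sub>v u) $ i = (\<Sum>j<n. f0 (i, j) * u $ j)" unfolding Y_def using mat_vec_idx[OF i uC] by simp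
        also have "\<dots> = (\<Sum>j<n. f0 (i, j) * (\<Sum>l<n. p j l * u $ l))"
        proof (intro sum.cong refl)
          fix j assume "j \<in> {..<n}"
          then have "u $ j = (\<Sum>l<n. p j l * u $ l)" using Pu[OF uC, of j] Pid[OF u] by simp
          then show "f0 (i, j) * u $ j = f0 (i, j) * (\<Sum>l<n. p j l * u $ l)" by simp
        qed
        also have "\<dots> = (\<Sum>j<n. \<Sum>l<n. f0 (i, j) * p j l * u $ l)"
          by (simp add: sum_distrib_left mult.assoc)
        also have "\<dots> = (\<Sum>l<n. \<Sum>j<n. f0 (i, j) * p j l * u $ l)"
          by (rule sum.swap)
        also have "\<dots> = (\<Sum>l<n. (\<Sum>j<n. f0 (i, j) * p j l) * u $ l)"
          by (simp add: sum_distrib_right)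
        also have "\<dots> = 0" using f0ker by simp
        finally show "(Y *\<^sub>v u) $ i = (0\<^sub>v n :: real vec) $ i" using i by simp
      qed (use YC in simp)
      then show "u \<in> mat_kernel Y" unfolding mat_kernel_def using uC YC by simp
    qed
    show ?thesis unfolding realizable_def using ell ker by auto
  next
    case False
    then have gpos: "0 < g f0" using g0le by simp
    have trneg: "(\<Sum>i<n. R i i) < 0" using trR RF gpos by linarith
    have npos: "0 < n" using trneg by (cases n) auto
    define \<epsilon> where "\<epsilon> = - (\<Sum>i<n. R i i) / (2 * real n)"
    have eps: "0 < \<epsilon>" unfolding \<epsilon>_def using trneg npos by (intro divide_pos_pos) auto
    define D where "D i j = R i j + \<epsilon> * dl i j" for i j
    have trD: "(\<Sum>i<n. D i i) < 0"
    proof -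
      have "(\<Sum>i<n. D i i) = (\<Sum>i<n. R i i) + real n * \<epsilon>" unfolding D_def by (simp add: sum.distrib dl_def)
      also have "real n * \<epsilon> = - (\<Sum>i<n. R i i) / 2" unfolding \<epsilon>_def using npos by simp
      finally show ?thesis using trneg by simp
    qed
    have Dsym: "D i j = D j i" for i j
      unfolding D_def R_def w_def dl_def using f0sym[of i j] blk_sym[of P i j] blk_sym[of P j i] by auto
    have Dw: "\<epsilon> * (\<Sum>i<n. wv $ i * wv $ i) \<le> qf n D (\<lambda>i. wv $ i)" if wo: "wv \<in> orth_compl n U" for wv
    proof -
      have "qf n D (\<lambda>i. wv $ i) = 1 * qf n R (\<lambda>i. wv $ i) + \<epsilon> * qf n dl (\<lambda>i. wv $ i)"
        unfolding D_def[abs_def] using qf_lin[of n 1 R \<epsilon> dl] by simp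
      moreover have "qf n R (\<lambda>i. wv $ i) = (\<Sum>i<n. \<Sum>j<n. R i j * (wv $ i * wv $ j))"
        unfolding qf_def by (simp add: mult_ac)
      moreover have "qf n dl (\<lambda>i. wv $ i) = (\<Sum>i<n. wv $ i * wv $ i)"
      proof -
        have "qf n dl (\<lambda>i. wv $ i) = (\<Sum>i<n. \<Sum>j<n. if j = i then wv $ i * wv $ i else 0)"
          unfolding qf_def dl_def by (intro sum.cong refl) auto
        then show ?thesis by simp
      qed
      ultimately show ?thesis using RW[OF wo] by simp
    qed
    define S where "S = (\<Sum>i<n. \<Sum>j<n. \<bar>D i j\<bar>)"
    define c where "c = S + S^2 / \<epsilon> + 1"
    have S0: "0 \<le> S" unfolding S_def by (intro sum_nonneg) auto
    have cpos: "0 < c" unfolding c_def using S0 eps by (simp add: add_nonneg_pos)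
    define Lc where "Lc = mat n n (\<lambda>(i, j). c * Pm $$ (i, j))"
    define Dm where "Dm = mat n n (\<lambda>(i, j). D i j)"
    have LcC: "Lc \<in> carrier_mat n n" unfolding Lc_def by simp
    have DmC: "Dm \<in> carrier_mat n n" unfolding Dm_def by simp
    have Psym: "Pm $$ (i, j) = Pm $$ (j, i)" if "i < n" "j < n" for i j using proj_sym[OF pr U that] .
    have qfPm: "0 \<le> qf n (\<lambda>i j. Pm $$ (i, j)) x" for x
    proof -
      have "qf n (\<lambda>i j. Pm $$ (i, j)) x = qf n (\<lambda>i j. Pm $$ (i, j)) (\<lambda>i. vec n x $ i)" by (rule qf_vec[symmetric])
      also have "\<dots> = (Pm *\<^sub>v vec n x) \<bullet> (Pm *\<^sub>v vec n x)" by (rule qfP[OF pr U]) simp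
      also have "\<dots> = (\<Sum>i<n. (Pm *\<^sub>v vec n x) $ i * (Pm *\<^sub>v vec n x) $ i)"
        using PC by (simp add: dot_eq[of _ n])
      finally show ?thesis by (simp add: sum_nonneg)
    qed
    have psdLc: "psd n Lc"
    proof (rule psdf_psd[OF LcC])
      fix i j assume "i < n" "j < n" then show "Lc $$ (i, j) = Lc $$ (j, i)" unfolding Lc_def using Psym by simp
    next
      show "psdf n (\<lambda>i j. Lc $$ (i, j))" unfolding psdf_def
      proof (intro conjI allI impI)
        fix i j assume "i < n" "j < n" then show "Lc $$ (i, j) = Lc $$ (j, i)" unfolding Lc_def using Psym by simp
      next
        fix x show "0 \<le> qf n (\<lambda>i j. Lc $$ (i, j)) x"
          unfolding Lc_def mat_qf using cpos qfPm by (simp add: qf_scale[of n c "\<lambda>i j. Pm $$ (i, j)"])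
      qed
    qed
    have Lcx: "Lc *\<^sub>v x = c \<cdot>\<^sub>v (Pm *\<^sub>v x)" if x: "x \<in> carrier_vec n" for x
    proof (rule eq_vecI)
      fix i assume "i < dim_vec (c \<cdot>\<^sub>v (Pm *\<^sub>v x))"
      then have i: "i < n" using PC by simp
      have "(Lc *\<^sub>v x) $ i = (\<Sum>j<n. c * Pm $$ (i, j) * x $ j)" unfolding Lc_def using mat_vec_idx[OF i x] by simp
      also have "\<dots> = c * (Pm *\<^sub>v x) $ i" using mat_vec_gen[OF PC i x] by (simp add: sum_distrib_left mult.assoc)
      finally show "(Lc *\<^sub>v x) $ i = (c \<cdot>\<^sub>v (Pm *\<^sub>v x)) $ i" using i PC by simp
    qed (use LcC PC in simp)
    have csL: "col_space n Lc = U"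
    proof
      show "col_space n Lc \<subseteq> U"
      proof
        fix v assume "v \<in> col_space n Lc"
        then obtain x where x: "x \<in> carrier_vec n" and v: "v = Lc *\<^sub>v x" unfolding col_space_def by auto
        show "v \<in> U" unfolding v Lcx[OF x] using PU[OF x] U unfolding is_subspace_def by auto
      qed
    next
      show "U \<subseteq> col_space n Lc"
      proof
        fix u assume u: "u \<in> U"
        have uC: "u \<in> carrier_vec n" using u UC by auto
        have cu: "(1 / c) \<cdot>\<^sub>v u \<in> U" using u U unfolding is_subspace_def by auto
        have cuC: "(1 / c) \<cdot>\<^sub>v u \<in> carrier_vec n" using uC by simp
        have "Lc *\<^sub>v ((1 / c) \<cdot>\<^sub>v u) = c \<cdot>\<^sub>v ((1 / c) \<cdot>\<^sub>v u)" unfolding Lcx[OF cuC] Pid[OF cu] ..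
        also have "\<dots> = u" using cpos by (simp add: smult_smult_assoc)
        finally have "u = Lc *\<^sub>v ((1 / c) \<cdot>\<^sub>v u)" by simp
        then show "u \<in> col_space n Lc" unfolding col_space_def using cuC by blast
      qed
    qed
    have Z: "block_diag n P (0\<^sub>m n n)" "transpose_mat (0\<^sub>m n n :: real mat) = 0\<^sub>m n n"
      unfolding block_diag_def by auto
    have uo: "bmtfa_unique_opt n P (0\<^sub>m n n + Lc) (0\<^sub>m n n) Lc"
      using Rc Z psdLc csL unfolding recoverable_def by blast
    define L' where "L' = Lc + Dm"
    define B' where "B' = 0\<^sub>m n n - Dm"
    have L'C: "L' \<in> carrier_mat n n" unfolding L'_def using LcC DmC by simp
    have feq: "0\<^sub>m n n + Lc = B' + L'"
      unfolding B'_def L'_def using LcC DmC by (intro eq_matI) auto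
    have psdL': "psd n L'"
    proof (rule psdf_psd[OF L'C])
      fix i j assume "i < n" "j < n"
      then show "L' $$ (i, j) = L' $$ (j, i)" unfolding L'_def Lc_def Dm_def using Psym Dsym by simp
    next
      show "psdf n (\<lambda>i j. L' $$ (i, j))" unfolding psdf_def
      proof (intro conjI allI impI)
        fix i j assume "i < n" "j < n"
        then show "L' $$ (i, j) = L' $$ (j, i)" unfolding L'_def Lc_def Dm_def using Psym Dsym by simp
      next
        fix x
        have "qf n (\<lambda>i j. L' $$ (i, j)) x = qf n (\<lambda>i j. c * Pm $$ (i, j) + 1 * D i j) x"
          unfolding qf_def L'_def Lc_def Dm_def by (intro sum.cong refl) auto
        also have "\<dots> = c * qf n (\<lambda>i j. Pm $$ (i, j)) x + 1 * qf n D x" by (rule qf_lin)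
        also have "\<dots> = c * qf n (\<lambda>i j. Pm $$ (i, j)) (\<lambda>i. vec n x $ i) + qf n D (\<lambda>i. vec n x $ i)"
          by (simp add: qf_vec)
        finally show "0 \<le> qf n (\<lambda>i j. L' $$ (i, j)) x"
          using schur[OF pr U eps Dw S_def c_def, of "vec n x"] by simp
      qed
    qed
    have bdB': "block_diag n P B'" unfolding block_diag_def
    proof (intro conjI allI impI)
      show "B' \<in> carrier_mat n n" unfolding B'_def using DmC by (rule minus_carrier_mat)
      fix i j assume ij: "i < n" "j < n" and nb: "\<not> (\<exists>I\<in>P. i \<in> I \<and> j \<in> I)"
      have nb': "\<not> blk P i j" using nb unfolding blk_def .
      then have "i \<noteq> j" using blk_refl[OF part ij(1)] by auto
      then show "B' $$ (i, j) = 0" unfolding B'_def Dm_def D_def R_def w_def dl_def using ij nb' DmC by simp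
    qed
    have feas: "bmtfa_feasible n P (0\<^sub>m n n + Lc) B' L'"
      unfolding bmtfa_feasible_def using feq psdL' bdB' by auto
    have trL': "mtrace L' = mtrace Lc + (\<Sum>i<n. D i i)"
      unfolding mtrace_eq[OF L'C] mtrace_eq[OF LcC] unfolding L'_def Dm_def using LcC
      by (simp add: sum.distrib)
    show ?thesis
    proof (cases "(B', L') = (0\<^sub>m n n, Lc)")
      case True
      then have "L' = Lc" by simp
      then have "(\<Sum>i<n. D i i) = 0" using trL' by simp
      then show ?thesis using trD by simp
    next
      case False
      then have "mtrace Lc < mtrace L'" using uo feas unfolding bmtfa_unique_opt_def by blast
      then show ?thesis using trL' trD by simp
    qed
  qed
qed


theorem proposition5p4:
  fixes n :: nat and P :: "nat set set" and U :: "real vec set"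
  assumes "partition_on {0..<n} P"
    and "is_subspace n U"
  shows "(recoverable n P U \<longleftrightarrow> realizable n P U) \<and>
         (realizable n P U \<longleftrightarrow> ellipsoid_fitting n P (orth_compl n U))"
  proof -
  have 1: "recoverable n P U \<longleftrightarrow> realizable n P U"
    using rec_real[OF assms] real_rec[OF assms] by blast
  have 2: "realizable n P U \<longleftrightarrow> ellipsoid_fitting n P (orth_compl n U)"
    using real_EF[OF assms] EF_real[OF assms] by blast
  show ?thesis using 1 2 by blast
qed

end
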